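(* Let $\mathbb{F}\in\{\mathbb{R},\mathbb{C},\mathbb{H}\}$, $G=\mathrm{SL}(3,\mathbb{F})$, and let $\mathcal{Q}_\sigma$ be the set of maximal $\sigma$-parabolic subgroups of $G$ (maximal parabolic $Q$ with $\sigma(Q)$ opposite to $Q$). The action of $H$ on $\mathcal{Q}_\sigma$ by conjugation has exactly four orbits, and these are the $H$-conjugacy classes of $Q_1,Q_2,Q_3,Q_4$.
   Context: $\theta(g)=(g^{-1})^\dagger$, $J=\mathrm{diag}(1,-1,-1)$, $\sigma(g)=J\theta(g)J$, $H$ the identity component of $G^\sigma$. $\mathfrak{a}$ = real traceless diagonal matrices; $\mathfrak{g}_{i,j}$ is the root space of $e_i-e_j$ (matrices with only nonzero entry in position $(i,j)$). $Q_i$ is the maximal parabolic subgroup whose Lie algebra contains $\mathfrak{a}$ and has nilradical $\mathfrak{n}_1=\mathfrak{g}_{1,3}\oplus\mathfrak{g}_{2,3}$, $\mathfrak{n}_2=\mathfrak{g}_{2,1}\oplus\mathfrak{g}_{3,1}$, $\mathfrak{n}_3=\mathfrak{g}_{1,2}\oplus\mathfrak{g}_{1,3}$, $\mathfrak{n}_4=\mathfrak{g}_{2,1}\oplus\mathfrak{g}_{2,3}$ respectively. *)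

theory Defs
  imports "HOL-Analysis.Analysis"
begin

datatype quat = Quat (qre: real) (qi: real) (qj: real) (qk: real)

lemma quat_eqI: "qre a = qre b \<Longrightarrow> qi a = qi b \<Longrightarrow> qj a = qj b \<Longrightarrow> qk a = qk b \<Longrightarrow> a = b"
  by (cases a, cases b) auto

instantiation quat :: ring_1
begin
definition "0 = Quat 0 0 0 0"
definition "1 = Quat 1 0 0 0"
definition "a + b = Quat (qre a + qre b) (qi a + qi b) (qj a + qj b) (qk a + qk b)"
definition "a - b = Quat (qre a - qre b) (qi a - qi b) (qj a - qj b) (qk a - qk b)"
definition "- a = Quat (- qre a) (- qi a) (- qj a) (- qk a)"
definition "a * b = Quat
   (qre a * qre b - qi a * qi b - qj a * qj b - qk a * qk b)
   (qre a * qi b + qi a * qre b + qj a * qk b - qk a * qj b)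
   (qre a * qj b - qi a * qk b + qj a * qre b + qk a * qi b)
   (qre a * qk b + qi a * qj b - qj a * qi b + qk a * qre b)"
instance
  by intro_classes
     (auto intro!: quat_eqI simp: zero_quat_def one_quat_def plus_quat_def minus_quat_def
        uminus_quat_def times_quat_def algebra_simps)
end

definition quat_coords :: "quat \<Rightarrow> real \<times> real \<times> real \<times> real" where
  "quat_coords q = (qre q, qi q, qj q, qk q)"

lemma inj_quat_coords: "inj quat_coords"
  by (rule injI) (auto simp: quat_coords_def intro: quat_eqI)

instantiation quat :: topological_space
begin
definition open_quat :: "quat set \<Rightarrow> bool" where
  "open_quat S \<longleftrightarrow> open (quat_coords ` S)"
lemma surj_quat_coords: "surj quat_coords"
  unfolding quat_coords_def surj_def by (metis quat.sel prod.collapse)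
instance
proof
  show "open (UNIV :: quat set)"
    unfolding open_quat_def using surj_quat_coords by simp
next
  fix S T :: "quat set" assume "open S" "open T"
  then show "open (S \<inter> T)"
    unfolding open_quat_def by (simp add: image_Int[OF inj_quat_coords] open_Int)
next
  fix K :: "quat set set" assume "\<forall>S\<in>K. open S"
  then show "open (\<Union>K)"
    unfolding open_quat_def by (auto simp: image_Union intro!: open_Union)
qed
end

class conjugation =
  fixes conjf :: "'a \<Rightarrow> 'a"

instantiation real :: conjugation
begin
definition "conjf (x::real) = x"
instance ..
end

instantiation complex :: conjugation
begin
definition "conjf (z::complex) = cnj z"
instance ..
end

instantiation quat :: conjugation
begin
definition "conjf q = Quat (qre q) (- qi q) (- qj q) (- qk q)"
instance ..
end

datatype ix = I1 | I2 | I3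

lemma UNIV_ix: "(UNIV :: ix set) = {I1, I2, I3}"
  using ix.exhaust by auto

instance ix :: finite
  by standard (simp add: UNIV_ix)

fun ixn :: "ix \<Rightarrow> nat" where
  "ixn I1 = 1" | "ixn I2 = 2" | "ixn I3 = 3"

type_synonym 'f mat3 = "'f ^ ix ^ ix"

definition ctrans :: "('f::conjugation) mat3 \<Rightarrow> 'f mat3" where
  "ctrans A = (\<chi> i j. conjf (A $ j $ i))"

definition theta :: "('f::{semiring_1,conjugation}) mat3 \<Rightarrow> 'f mat3" where
  "theta g = ctrans (matrix_inv g)"

definition Jmat :: "('f::ring_1) mat3" where
  "Jmat = (\<chi> i j. if i = j then (if i = I1 then 1 else -1) else 0)"

definition sigma :: "('f::{ring_1,conjugation}) mat3 \<Rightarrow> 'f mat3" where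
  "sigma g = Jmat ** theta g ** Jmat"

definition SL3R :: "real mat3 set" where
  "SL3R = {g. det g = 1}"

definition SL3C :: "complex mat3 set" where
  "SL3C = {g. det g = 1}"

text \<open>Standard embedding H -> M_2(C):
  a+bi+cj+dk |-> [[a+bi, c+di], [-c+di, a-bi]], extended blockwise.\<close>
definition qz :: "quat \<Rightarrow> complex" where "qz q = Complex (qre q) (qi q)"
definition qw :: "quat \<Rightarrow> complex" where "qw q = Complex (qj q) (qk q)"

definition quat_to_cmat :: "quat mat3 \<Rightarrow> complex ^ (ix + ix) ^ (ix + ix)" where
  "quat_to_cmat A = (\<chi> r s. case (r, s) of
      (Inl i, Inl j) \<Rightarrow> qz (A $ i $ j)
    | (Inl i, Inr j) \<Rightarrow> qw (A $ i $ j)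
    | (Inr i, Inl j) \<Rightarrow> - cnj (qw (A $ i $ j))
    | (Inr i, Inr j) \<Rightarrow> cnj (qz (A $ i $ j)))"

definition SL3H :: "quat mat3 set" where
  "SL3H = {g. invertible g \<and> det (quat_to_cmat g) = 1}"

definition conjset :: "('f::semiring_1) mat3 \<Rightarrow> 'f mat3 set \<Rightarrow> 'f mat3 set" where
  "conjset g S = (\<lambda>x. g ** x ** matrix_inv g) ` S"

definition is_subgroup :: "('f::semiring_1) mat3 set \<Rightarrow> 'f mat3 set \<Rightarrow> bool" where
  "is_subgroup G Q \<longleftrightarrow> Q \<subseteq> G \<and> mat 1 \<in> Q \<and> (\<forall>x\<in>Q. \<forall>y\<in>Q. x ** y \<in> Q)
      \<and> (\<forall>x\<in>Q. matrix_inv x \<in> Q)"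

text \<open>Standard minimal parabolic subgroup P_0 = Z_G(a) N (upper triangular elements of G),
  for the positive system e_i - e_j, i < j.\<close>
definition min_parabolic :: "('f::semiring_1) mat3 set \<Rightarrow> 'f mat3 set" where
  "min_parabolic G = {g \<in> G. \<forall>i j. ixn j < ixn i \<longrightarrow> g $ i $ j = 0}"

definition parabolic :: "('f::semiring_1) mat3 set \<Rightarrow> 'f mat3 set \<Rightarrow> bool" where
  "parabolic G Q \<longleftrightarrow> is_subgroup G Q \<and> (\<exists>g\<in>G. conjset g (min_parabolic G) \<subseteq> Q)"

definition maximal_parabolic :: "('f::semiring_1) mat3 set \<Rightarrow> 'f mat3 set \<Rightarrow> bool" where
  "maximal_parabolic G Q \<longleftrightarrow> parabolic G Q \<and> Q \<noteq> G \<and>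
     (\<forall>Q'. parabolic G Q' \<and> Q \<subseteq> Q' \<and> Q' \<noteq> G \<longrightarrow> Q' = Q)"

definition opposite :: "('f::{semiring_1,conjugation}) mat3 set \<Rightarrow> 'f mat3 set \<Rightarrow> 'f mat3 set \<Rightarrow> bool" where
  "opposite G Q Q' \<longleftrightarrow> (\<exists>g\<in>G. \<exists>P. parabolic G P \<and> min_parabolic G \<subseteq> P \<and>
       Q = conjset g P \<and> Q' = conjset g (theta ` P))"

definition sigma_parabolics :: "('f::{ring_1,conjugation}) mat3 set \<Rightarrow> 'f mat3 set set" where
  "sigma_parabolics G = {Q. maximal_parabolic G Q \<and> opposite G Q (sigma ` Q)}"

definition Hgrp :: "('f::{ring_1,conjugation,topological_space}) mat3 set \<Rightarrow> 'f mat3 set" where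
  "Hgrp G = connected_component_set {g \<in> G. sigma g = g} (mat 1)"

definition H_orbit :: "('f::{ring_1,conjugation,topological_space}) mat3 set \<Rightarrow> 'f mat3 set \<Rightarrow> 'f mat3 set set" where
  "H_orbit G Q = {conjset h Q | h. h \<in> Hgrp G}"

definition Q1 :: "('f::semiring_1) mat3 set \<Rightarrow> 'f mat3 set" where
  "Q1 G = {g \<in> G. g $ I3 $ I1 = 0 \<and> g $ I3 $ I2 = 0}"
definition Q2 :: "('f::semiring_1) mat3 set \<Rightarrow> 'f mat3 set" where
  "Q2 G = {g \<in> G. g $ I1 $ I2 = 0 \<and> g $ I1 $ I3 = 0}"
definition Q3 :: "('f::semiring_1) mat3 set \<Rightarrow> 'f mat3 set" where
  "Q3 G = {g \<in> G. g $ I2 $ I1 = 0 \<and> g $ I3 $ I1 = 0}"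
definition Q4 :: "('f::semiring_1) mat3 set \<Rightarrow> 'f mat3 set" where
  "Q4 G = {g \<in> G. g $ I1 $ I2 = 0 \<and> g $ I3 $ I2 = 0}"

definition four_orbits :: "('f::{ring_1,conjugation,topological_space}) mat3 set \<Rightarrow> bool" where
  "four_orbits G \<longleftrightarrow>
     H_orbit G ` sigma_parabolics G = {H_orbit G (Q1 G), H_orbit G (Q2 G), H_orbit G (Q3 G), H_orbit G (Q4 G)}
     \<and> card (H_orbit G ` sigma_parabolics G) = 4"

end

theory Submission
  imports Defs
begin

class qfield = ring_1 + conjugation + topological_space +
  fixes rinv :: "'a \<Rightarrow> 'a" and ofr :: "real \<Rightarrow> 'a" and nsq :: "'a \<Rightarrow> real"
  assumes rinv_r: "x \<noteq> 0 \<Longrightarrow> x * rinv x = 1"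
  and rinv_l: "x \<noteq> 0 \<Longrightarrow> rinv x * x = 1"
  and ofr_add: "ofr (a + b) = ofr a + ofr b"
  and ofr_mult: "ofr (a * b) = ofr a * ofr b"
  and ofr_1: "ofr 1 = 1"
  and ofr_inj: "ofr a = ofr b \<Longrightarrow> a = b"
  and ofr_comm: "ofr a * x = x * ofr a"
  and conj_add: "conjf (x + y) = conjf x + conjf y"
  and conj_mult: "conjf (x * y) = conjf y * conjf x"
  and conj_conj: "conjf (conjf x) = x"
  and conj_ofr: "conjf (ofr a) = ofr a"
  and conj_mult_self: "conjf x * x = ofr (nsq x)"
  and mult_conj_self: "x * conjf x = ofr (nsq x)"
  and nsq_nonneg: "nsq x \<ge> 0"
  and nsq_zero: "nsq x = 0 \<Longrightarrow> x = 0"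

instantiation real :: qfield
begin
definition "rinv_real (x::real) = inverse x"
definition "ofr_real (x::real) = x"
definition "nsq_real (x::real) = x * x"
instance
  by standard (auto simp: rinv_real_def ofr_real_def nsq_real_def conjf_real_def
      intro!: continuous_intros)
end

instantiation complex :: qfield
begin
definition "rinv_complex (x::complex) = inverse x"
definition "ofr_complex (x::real) = complex_of_real x"
definition "nsq_complex (x::complex) = (cmod x)^2"
instance
proof
  fix x y :: complex and a b :: real
  show "conjf x * x = ofr (nsq x)" "x * conjf x = ofr (nsq x)"
    unfolding conjf_complex_def ofr_complex_def nsq_complex_def
    by (simp_all only: complex_norm_square mult.commute)
qed (auto simp: rinv_complex_def ofr_complex_def nsq_complex_def conjf_complex_def
      intro!: continuous_intros)
end

lemma quat_coords_continuous: "continuous_on UNIV quat_coords"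
  unfolding continuous_on_open_invariant
proof (intro allI impI)
  fix B :: "(real\<times>real\<times>real\<times>real) set" assume "open B"
  have "quat_coords ` (quat_coords -` B) = B" using surj_quat_coords by (simp add: surj_image_vimage_eq)
  then show "\<exists>A. open A \<and> A \<inter> UNIV = quat_coords -` B \<inter> UNIV"
    using \<open>open B\<close> by (intro exI[of _ "quat_coords -` B"]) (simp add: open_quat_def)
qed

lemma continuous_on_quat_iff:
  "continuous_on S (f :: 'b::topological_space \<Rightarrow> quat) \<longleftrightarrow> continuous_on S (quat_coords \<circ> f)"
proof
  assume "continuous_on S f" then show "continuous_on S (quat_coords \<circ> f)"
    using quat_coords_continuous by (rule continuous_on_compose[OF _ continuous_on_subset]) auto
next
  assume c: "continuous_on S (quat_coords \<circ> f)"
  show "continuous_on S f"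
    unfolding continuous_on_open_invariant
  proof (intro allI impI)
    fix B :: "quat set" assume "open B"
    then have "open (quat_coords ` B)" by (simp add: open_quat_def)
    with c obtain A where A: "open A" "A \<inter> S = (quat_coords \<circ> f) -` (quat_coords ` B) \<inter> S"
      unfolding continuous_on_open_invariant by blast
    have "(quat_coords \<circ> f) -` (quat_coords ` B) = f -` B"
      by (simp add: vimage_def inj_image_mem_iff[OF inj_quat_coords])
    with A show "\<exists>A. open A \<and> A \<inter> S = f -` B \<inter> S" by auto
  qed
qed

lemma quat_coords_simps: "quat_coords q = (qre q, qi q, qj q, qk q)" by (simp add: quat_coords_def)

lemma cont_quat_coordsI:
  assumes "continuous_on S (\<lambda>x. qre (f x))" "continuous_on S (\<lambda>x. qi (f x))"
          "continuous_on S (\<lambda>x. qj (f x))" "continuous_on S (\<lambda>x. qk (f x))"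
  shows "continuous_on S (f :: 'b::topological_space \<Rightarrow> quat)"
  unfolding continuous_on_quat_iff o_def quat_coords_simps
  using assms by (intro continuous_intros)

lemma cont_qre: "continuous_on UNIV qre" and cont_qi: "continuous_on UNIV qi"
  and cont_qj: "continuous_on UNIV qj" and cont_qk: "continuous_on UNIV qk"
proof -
  have c: "continuous_on UNIV quat_coords" by (rule quat_coords_continuous)
  have "continuous_on UNIV (\<lambda>q. fst (quat_coords q))" "continuous_on UNIV (\<lambda>q. fst (snd (quat_coords q)))"
    "continuous_on UNIV (\<lambda>q. fst (snd (snd (quat_coords q))))" "continuous_on UNIV (\<lambda>q. snd (snd (snd (quat_coords q))))"
    using c by (intro continuous_intros; assumption)+
  then show "continuous_on UNIV qre" "continuous_on UNIV qi" "continuous_on UNIV qj" "continuous_on UNIV qk"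
    by (simp_all add: quat_coords_def)
qed

lemma cont_comp_q:
  assumes "continuous_on S f" shows "continuous_on S (\<lambda>x. qre (f x))" "continuous_on S (\<lambda>x. qi (f x))"
    "continuous_on S (\<lambda>x. qj (f x))" "continuous_on S (\<lambda>x. qk (f x))"
  using continuous_on_compose[OF assms continuous_on_subset[OF cont_qre]]
    continuous_on_compose[OF assms continuous_on_subset[OF cont_qi]]
    continuous_on_compose[OF assms continuous_on_subset[OF cont_qj]]
    continuous_on_compose[OF assms continuous_on_subset[OF cont_qk]]
  by (auto simp: o_def)

instantiation quat :: qfield
begin
definition "nsq_quat q = (qre q)^2 + (qi q)^2 + (qj q)^2 + (qk q)^2"
definition "rinv_quat q = Quat (qre q / nsq q) (- qi q / nsq q) (- qj q / nsq q) (- qk q / nsq q)"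
definition "ofr_quat r = Quat r 0 0 0"
instance
proof
  fix x y :: quat and a b :: real and c :: quat
  have np: "x \<noteq> 0 \<Longrightarrow> nsq x \<noteq> 0"
    by (cases x) (auto simp: nsq_quat_def zero_quat_def add_nonneg_eq_0_iff)
  show "x \<noteq> 0 \<Longrightarrow> x * rinv x = 1" "x \<noteq> 0 \<Longrightarrow> rinv x * x = 1"
  proof -
    assume "x \<noteq> 0"
    then have n: "nsq x \<noteq> 0" by (rule np)
    have e: "qre x * qre x + qi x * qi x + qj x * qj x + qk x * qk x = nsq x"
      by (simp add: nsq_quat_def power2_eq_square)
    show "x * rinv x = 1" "rinv x * x = 1"
      by (rule quat_eqI; simp add: times_quat_def rinv_quat_def one_quat_def
          add_divide_distrib[symmetric] diff_divide_distrib[symmetric] e n; simp add: algebra_simps)+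
  qed
  show "ofr (a + b) = (ofr a + ofr b :: quat)" "ofr (a * b) = (ofr a * ofr b :: quat)" "ofr 1 = (1::quat)"
    "ofr a * x = x * ofr a"
    by (auto intro!: quat_eqI simp: ofr_quat_def plus_quat_def times_quat_def one_quat_def)
  show "ofr a = (ofr b :: quat) \<Longrightarrow> a = b" by (simp add: ofr_quat_def)
  show "conjf (x + y) = conjf x + conjf y" "conjf (x * y) = conjf y * conjf x"
    "conjf (conjf x) = x" "conjf (ofr a :: quat) = ofr a"
    by (auto intro!: quat_eqI simp: conjf_quat_def plus_quat_def times_quat_def ofr_quat_def)
  show "conjf x * x = ofr (nsq x)" "x * conjf x = ofr (nsq x)"
    by (auto intro!: quat_eqI simp: conjf_quat_def times_quat_def ofr_quat_def nsq_quat_def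
        power2_eq_square)
  show "nsq x \<ge> 0" by (simp add: nsq_quat_def)
  show "nsq x = 0 \<Longrightarrow> x = 0"
    by (cases x) (auto simp: nsq_quat_def zero_quat_def add_nonneg_eq_0_iff)
qed
end

lemma quat_cont_add: "continuous_on UNIV (\<lambda>p::quat\<times>quat. fst p + snd p)"
    by (rule cont_quat_coordsI)
       (auto simp: plus_quat_def intro!: continuous_intros cont_comp_q continuous_on_fst continuous_on_snd)
lemma quat_cont_mult: fixes c :: quat shows "continuous_on UNIV (\<lambda>x. c * x)" "continuous_on UNIV (\<lambda>x. x * c)"
    by (rule cont_quat_coordsI; auto simp: times_quat_def intro!: continuous_intros cont_comp_q continuous_on_id)+
lemma quat_cont_ofr: "continuous_on UNIV (ofr :: real \<Rightarrow> quat)"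
    by (rule cont_quat_coordsI) (auto simp: ofr_quat_def intro!: continuous_intros)


context qfield begin

lemma ofr_0[simp]: "ofr 0 = 0"
proof -
  have "ofr 0 + ofr 0 = ofr 0 + 0" using ofr_add[of 0 0] by simp
  then show ?thesis by (rule add_left_imp_eq)
qed

lemma ofr_1'[simp]: "ofr 1 = 1" by (rule ofr_1)

lemma ofr_neg: "ofr (- a) = - ofr a"
  using ofr_add[of a "-a"] by (simp add: eq_neg_iff_add_eq_0 add.commute)

lemma ofr_diff: "ofr (a - b) = ofr a - ofr b"
  using ofr_add[of a "-b"] ofr_neg[of b] by simp

lemma ofr_eq_iff[simp]: "ofr a = ofr b \<longleftrightarrow> a = b"
  using ofr_inj by blast

lemma ofr_eq_0_iff[simp]: "ofr a = 0 \<longleftrightarrow> a = 0"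
  using ofr_eq_iff[of a 0] by simp

lemma ofr_eq_1_iff[simp]: "ofr a = 1 \<longleftrightarrow> a = 1"
  using ofr_eq_iff[of a 1] by simp

lemma no_zd: "x * y = 0 \<Longrightarrow> x = 0 \<or> y = 0"
proof (rule ccontr)
  assume "x * y = 0" "\<not> (x = 0 \<or> y = 0)"
  then have "x \<noteq> 0" "y \<noteq> 0" by auto
  have "rinv x * (x * y) = y" by (simp add: mult.assoc[symmetric] rinv_l[OF \<open>x \<noteq> 0\<close>])
  with \<open>x * y = 0\<close> \<open>y \<noteq> 0\<close> show False by simp
qed

end

subclass (in qfield) ring_1_no_zero_divisors
  by standard (use no_zd in blast)

context qfield begin

lemma conj_0[simp]: "conjf 0 = 0" using conj_ofr[of 0] by simp
lemma conj_1[simp]: "conjf 1 = 1" using conj_ofr[of 1] by simp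
lemma conj_neg: "conjf (- x) = - conjf x"
  using conj_add[of x "-x"] by (simp add: eq_neg_iff_add_eq_0 add.commute)
lemma conj_diff: "conjf (x - y) = conjf x - conjf y"
  using conj_add[of x "-y"] conj_neg[of y] by simp
lemma conj_eq_0_iff[simp]: "conjf x = 0 \<longleftrightarrow> x = 0"
  by (metis conj_0 conj_conj)

lemma nsq_0[simp]: "nsq 0 = 0"
  using conj_mult_self[of 0] by (metis ofr_eq_0_iff mult_zero_right)
lemma nsq_eq_0_iff[simp]: "nsq x = 0 \<longleftrightarrow> x = 0"
  using nsq_zero by auto
lemma nsq_pos: "x \<noteq> 0 \<Longrightarrow> nsq x > 0"
  using nsq_nonneg[of x] nsq_zero[of x] by linarith
lemma nsq_mult: "nsq (x * y) = nsq x * nsq y"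
proof -
  have "ofr (nsq (x * y)) = conjf y * (conjf x * x) * y"
    by (simp add: conj_mult_self[symmetric] conj_mult mult.assoc)
  also have "\<dots> = ofr (nsq x) * (conjf y * y)" by (metis conj_mult_self ofr_comm mult.assoc)
  also have "\<dots> = ofr (nsq x * nsq y)" by (simp add: conj_mult_self ofr_mult)
  finally show ?thesis by simp
qed
lemma nsq_1[simp]: "nsq 1 = 1"
proof -
  have "ofr (nsq 1) = ofr 1" using conj_mult_self[of 1] by simp
  then show ?thesis by (simp only: ofr_eq_iff)
qed
lemma nsq_ofr[simp]: "nsq (ofr a) = a * a"
  using conj_mult_self[of "ofr a"] by (simp add: conj_ofr flip: ofr_mult)
lemma nsq_conj[simp]: "nsq (conjf x) = nsq x"
  using conj_mult_self[of "conjf x"] mult_conj_self[of x] by (simp add: conj_conj)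
lemma nsq_neg[simp]: "nsq (- x) = nsq x"
  using conj_mult_self[of "-x"] conj_mult_self[of x] by (simp add: conj_neg)

lemma rinv_unique: "x * y = 1 \<Longrightarrow> rinv x = y"
proof -
  assume a: "x * y = 1"
  then have "x \<noteq> 0" by auto
  then have "rinv x = rinv x * (x * y)" using a by simp
  also have "\<dots> = y" using \<open>x \<noteq> 0\<close> by (simp add: mult.assoc[symmetric] rinv_l)
  finally show ?thesis .
qed

lemma rinv_ofr: "a \<noteq> 0 \<Longrightarrow> rinv (ofr a) = ofr (1 / a)"
  by (rule rinv_unique) (simp flip: ofr_mult)

lemma rinv_nz: "x \<noteq> 0 \<Longrightarrow> rinv x \<noteq> 0"
  by (metis rinv_r mult_zero_right zero_neq_one)

lemma nsq_rinv: "x \<noteq> 0 \<Longrightarrow> nsq (rinv x) = 1 / nsq x"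
  using nsq_mult[of x "rinv x"] rinv_r[of x] nsq_pos[of x]
  by (simp add: field_simps)

lemma rinv_mult_cancel: "x \<noteq> 0 \<Longrightarrow> rinv x * (x * y) = y"
  by (simp add: mult.assoc[symmetric] rinv_l)
lemma mult_rinv_cancel: "x \<noteq> 0 \<Longrightarrow> x * (rinv x * y) = y"
  by (simp add: mult.assoc[symmetric] rinv_r)
lemma mult_rinv_cancel2: "x \<noteq> 0 \<Longrightarrow> (y * rinv x) * x = y"
  by (simp add: mult.assoc rinv_l)
lemma mult_rinv_cancel3: "x \<noteq> 0 \<Longrightarrow> (y * x) * rinv x = y"
  by (simp add: mult.assoc rinv_r)

lemma ofr_comm2: "x * (ofr a * y) = ofr a * (x * y)"
  by (metis mult.assoc ofr_comm)

lemma conj_ofr_mult: "conjf (ofr a * x) = ofr a * conjf x"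
  by (simp add: conj_mult conj_ofr) (rule ofr_comm[symmetric])

lemma left_cancel_nz: "x \<noteq> 0 \<Longrightarrow> x * y = x * z \<longleftrightarrow> y = z"
  by (metis rinv_mult_cancel)
lemma right_cancel_nz: "x \<noteq> 0 \<Longrightarrow> y * x = z * x \<longleftrightarrow> y = z"
  by (metis mult_rinv_cancel3)

end

subsection \<open>3x3 matrices\<close>

lemma ix_all: "(\<forall>i. P i) \<longleftrightarrow> P I1 \<and> P I2 \<and> P I3"
  by (metis ix.exhaust)
lemma ix_ex: "(\<exists>i. P i) \<longleftrightarrow> P I1 \<or> P I2 \<or> P I3"
  by (metis ix.exhaust)

lemma sum_ix: "sum f (UNIV :: ix set) = f I1 + f I2 + f I3"
  by (simp add: UNIV_ix add.assoc)

lemma mm_entry: "((A :: 'a::semiring_1 mat3) ** B) $ i $ j = A$i$I1 * B$I1$j + A$i$I2 * B$I2$j + A$i$I3 * B$I3$j"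
  by (simp add: matrix_matrix_mult_def sum_ix)

lemma mat3_eq_iff: "(A :: 'a mat3) = B \<longleftrightarrow>
   A$I1$I1 = B$I1$I1 \<and> A$I1$I2 = B$I1$I2 \<and> A$I1$I3 = B$I1$I3 \<and>
   A$I2$I1 = B$I2$I1 \<and> A$I2$I2 = B$I2$I2 \<and> A$I2$I3 = B$I2$I3 \<and>
   A$I3$I1 = B$I3$I1 \<and> A$I3$I2 = B$I3$I2 \<and> A$I3$I3 = B$I3$I3"
  by (auto simp: vec_eq_iff ix_all)

lemma mat1_entry: "(mat 1 :: 'a::semiring_1 mat3) $ i $ j = (if i = j then 1 else 0)"
  by (simp add: mat_def)

definition M3 :: "'a \<Rightarrow> 'a \<Rightarrow> 'a \<Rightarrow> 'a \<Rightarrow> 'a \<Rightarrow> 'a \<Rightarrow> 'a \<Rightarrow> 'a \<Rightarrow> 'a \<Rightarrow> 'a mat3" where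
  "M3 a11 a12 a13 a21 a22 a23 a31 a32 a33 = (\<chi> i j. case i of
     I1 \<Rightarrow> (case j of I1 \<Rightarrow> a11 | I2 \<Rightarrow> a12 | I3 \<Rightarrow> a13)
   | I2 \<Rightarrow> (case j of I1 \<Rightarrow> a21 | I2 \<Rightarrow> a22 | I3 \<Rightarrow> a23)
   | I3 \<Rightarrow> (case j of I1 \<Rightarrow> a31 | I2 \<Rightarrow> a32 | I3 \<Rightarrow> a33))"

lemma M3_entry[simp]:
  "M3 a11 a12 a13 a21 a22 a23 a31 a32 a33 $ I1 $ I1 = a11"
  "M3 a11 a12 a13 a21 a22 a23 a31 a32 a33 $ I1 $ I2 = a12"
  "M3 a11 a12 a13 a21 a22 a23 a31 a32 a33 $ I1 $ I3 = a13"
  "M3 a11 a12 a13 a21 a22 a23 a31 a32 a33 $ I2 $ I1 = a21"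
  "M3 a11 a12 a13 a21 a22 a23 a31 a32 a33 $ I2 $ I2 = a22"
  "M3 a11 a12 a13 a21 a22 a23 a31 a32 a33 $ I2 $ I3 = a23"
  "M3 a11 a12 a13 a21 a22 a23 a31 a32 a33 $ I3 $ I1 = a31"
  "M3 a11 a12 a13 a21 a22 a23 a31 a32 a33 $ I3 $ I2 = a32"
  "M3 a11 a12 a13 a21 a22 a23 a31 a32 a33 $ I3 $ I3 = a33"
  by (simp_all add: M3_def)

lemma ctrans_entry: "ctrans A $ i $ j = conjf (A $ j $ i)"
  by (simp add: ctrans_def)

lemma Jmat_entry: "(Jmat :: 'a::ring_1 mat3) $ i $ j = (if i = j then (if i = I1 then 1 else -1) else 0)"
  by (simp add: Jmat_def)

definition U :: "ix \<Rightarrow> ix \<Rightarrow> 'a::ring_1 \<Rightarrow> 'a mat3" where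
  "U i j t = (\<chi> k l. if k = l then 1 else if k = i \<and> l = j then t else 0)"

lemma U_entry: "U i j t $ k $ l = (if k = l then 1 else if k = i \<and> l = j then t else 0)"
  by (simp add: U_def)

lemma mult_U_entry: "i \<noteq> j \<Longrightarrow> ((A :: 'a::ring_1 mat3) ** U i j t) $ k $ l = A$k$l + (if l = j then A$k$i * t else 0)"
  by (cases i; cases j; cases k; cases l; simp add: mm_entry U_entry)

lemma U_mult_entry: "i \<noteq> j \<Longrightarrow> (U i j t ** (A :: 'a::ring_1 mat3)) $ k $ l = A$k$l + (if k = i then t * A$j$l else 0)"
  by (cases i; cases j; cases k; cases l; simp add: mm_entry U_entry)

lemma U_0: "U i j 0 = mat 1"
  by (simp add: U_def mat_def vec_eq_iff)

lemma U_mult_U: "i \<noteq> j \<Longrightarrow> U i j s ** U i j t = U i j (s + t)"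
  by (simp add: vec_eq_iff U_mult_entry) (simp add: U_entry)

lemma matrix_inv_unique:
  fixes A :: "'a::semiring_1 mat3"
  assumes "A ** B = mat 1" "B ** A = mat 1"
  shows "matrix_inv A = B"
proof -
  have ex: "\<exists>A'. A ** A' = mat 1 \<and> A' ** A = mat 1" using assms by blast
  define C where "C = matrix_inv A"
  have C: "A ** C = mat 1" "C ** A = mat 1"
    using someI_ex[OF ex] unfolding C_def matrix_inv_def by auto
  have "C = C ** (A ** B)" using assms by simp
  also have "\<dots> = B" by (simp add: matrix_mul_assoc C)
  finally show ?thesis unfolding C_def .
qed

lemma matrix_inv_props:
  fixes A :: "'a::semiring_1 mat3"
  assumes "invertible A"
  shows "A ** matrix_inv A = mat 1" "matrix_inv A ** A = mat 1"
  using assms someI_ex[of "\<lambda>A'. A ** A' = mat 1 \<and> A' ** A = mat 1"]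
  unfolding invertible_def matrix_inv_def by auto

lemma matrix_inv_U: "i \<noteq> j \<Longrightarrow> matrix_inv (U i j t) = U i j (- t)"
  by (rule matrix_inv_unique) (simp_all add: U_mult_U U_0)

context qfield begin
end

lemma ctrans_mult: "ctrans ((A :: 'a::qfield mat3) ** B) = ctrans B ** ctrans A"
  by (simp add: vec_eq_iff ix_all mm_entry ctrans_entry conj_add conj_mult)

lemma ctrans_ctrans[simp]: "ctrans (ctrans (A :: 'a::qfield mat3)) = A"
  by (simp add: vec_eq_iff ctrans_entry conj_conj)

lemma ctrans_one[simp]: "ctrans (mat 1 :: 'a::qfield mat3) = mat 1"
  by (simp add: vec_eq_iff ctrans_entry mat1_entry)

lemma ctrans_J[simp]: "ctrans (Jmat :: 'a::qfield mat3) = Jmat"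
  by (simp add: vec_eq_iff ctrans_entry Jmat_entry conj_neg)

lemma J_J[simp]: "(Jmat :: 'a::ring_1 mat3) ** Jmat = mat 1"
  by (simp add: mat3_eq_iff mm_entry Jmat_entry mat1_entry)

lemma ctrans_U: "ctrans (U i j t :: 'a::qfield mat3) = U j i (conjf t)"
  by (auto simp: vec_eq_iff ctrans_entry U_entry conj_conj)

lemma M3_mult: "(M3 a11 a12 a13 a21 a22 a23 a31 a32 a33 :: 'a::semiring_1 mat3) ** M3 b11 b12 b13 b21 b22 b23 b31 b32 b33 =
  M3 (a11*b11 + a12*b21 + a13*b31) (a11*b12 + a12*b22 + a13*b32) (a11*b13 + a12*b23 + a13*b33)
     (a21*b11 + a22*b21 + a23*b31) (a21*b12 + a22*b22 + a23*b32) (a21*b13 + a22*b23 + a23*b33)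
     (a31*b11 + a32*b21 + a33*b31) (a31*b12 + a32*b22 + a33*b32) (a31*b13 + a32*b23 + a33*b33)"
  by (simp add: mat3_eq_iff mm_entry)

lemma mat1_M3: "(mat 1 :: 'a::semiring_1 mat3) = M3 1 0 0 0 1 0 0 0 1"
  by (simp add: mat3_eq_iff mat1_entry)

lemma J_M3: "(Jmat :: 'a::ring_1 mat3) = M3 1 0 0 0 (-1) 0 0 0 (-1)"
  by (simp add: mat3_eq_iff Jmat_entry)

lemma ctrans_M3: "ctrans (M3 a11 a12 a13 a21 a22 a23 a31 a32 a33 :: 'a::qfield mat3) =
  M3 (conjf a11) (conjf a21) (conjf a31) (conjf a12) (conjf a22) (conjf a32) (conjf a13) (conjf a23) (conjf a33)"
  by (simp add: mat3_eq_iff ctrans_entry)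

lemma U_M3: "U I1 I2 t = M3 1 t 0 0 1 0 0 0 1" "U I1 I3 t = M3 1 0 t 0 1 0 0 0 1"
  "U I2 I3 t = M3 1 0 0 0 1 t 0 0 1" "U I2 I1 t = M3 1 0 0 t 1 0 0 0 1"
  "U I3 I1 t = M3 1 0 0 0 1 0 t 0 1" "U I3 I2 t = M3 1 0 0 0 1 0 0 t 1"
  by (simp_all add: mat3_eq_iff U_entry)


context qfield begin
lemma key_cancel_l: "y * a = a \<Longrightarrow> y * b = b + a \<Longrightarrow> a = 0"
proof (rule ccontr)
  assume h: "y * a = a" "y * b = b + a" "a \<noteq> 0"
  have "(y - 1) * a = 0" using h by (simp add: algebra_simps)
  then have "y = 1" using h by simp
  then show False using h by simp
qed
lemma key_cancel_r: "a * y = a \<Longrightarrow> b * y = b + a \<Longrightarrow> a = 0"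
proof (rule ccontr)
  assume h: "a * y = a" "b * y = b + a" "a \<noteq> 0"
  have "a * (y - 1) = 0" using h by (simp add: algebra_simps)
  then have "y = 1" using h by simp
  then show False using h by simp
qed
end

lemma mat3_expand: "(x :: 'a mat3) = M3 (x$I1$I1) (x$I1$I2) (x$I1$I3) (x$I2$I1) (x$I2$I2) (x$I2$I3) (x$I3$I1) (x$I3$I2) (x$I3$I3)"
  by (simp add: mat3_eq_iff)

definition RowP :: "('a::semiring_1) mat3 set \<Rightarrow> ix \<Rightarrow> 'a mat3 set" where
  "RowP G r = {x \<in> G. \<forall>s. s \<noteq> r \<longrightarrow> x$r$s = 0}"
definition ColP :: "('a::semiring_1) mat3 set \<Rightarrow> ix \<Rightarrow> 'a mat3 set" where
  "ColP G c = {x \<in> G. \<forall>s. s \<noteq> c \<longrightarrow> x$s$c = 0}"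

lemma Q_RowColP: "Q1 G = RowP G I3" "Q2 G = RowP G I1" "Q3 G = ColP G I1" "Q4 G = ColP G I2"
  by (auto simp: Q1_def Q2_def Q3_def Q4_def RowP_def ColP_def ix_all)

lemma RowP_mult_entry: "\<forall>s. s \<noteq> r \<longrightarrow> (y :: 'a::semiring_1 mat3)$r$s = 0 \<Longrightarrow> (y ** (k :: 'a mat3))$r$m = y$r$r * k$r$m"
  by (cases r) (auto simp: mm_entry ix_all)

lemma ColP_mult_entry: "\<forall>s. s \<noteq> c \<longrightarrow> (y :: 'a::semiring_1 mat3)$s$c = 0 \<Longrightarrow> ((k :: 'a mat3) ** y)$m$c = k$m$c * y$c$c"
  by (cases c) (auto simp: mm_entry ix_all)

locale sgrp =
  fixes G :: "('a::qfield) mat3 set"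
  assumes G_inv: "g \<in> G \<Longrightarrow> invertible g"
  and G_mult: "g \<in> G \<Longrightarrow> h \<in> G \<Longrightarrow> g ** h \<in> G"
  and G_one: "mat 1 \<in> G"
  and G_minv: "g \<in> G \<Longrightarrow> matrix_inv g \<in> G"
  and G_U: "i \<noteq> j \<Longrightarrow> U i j t \<in> G"
  and G_ctrans: "g \<in> G \<Longrightarrow> ctrans g \<in> G"
  and cont_add: "continuous_on (UNIV::('a\<times>'a) set) (\<lambda>p. fst p + snd p)"
  and cont_lmult: "continuous_on (UNIV::'a set) (\<lambda>x. c * x)"
  and cont_rmult: "continuous_on (UNIV::'a set) (\<lambda>x. x * c)"
  and cont_ofr: "continuous_on (UNIV::real set) (ofr :: real \<Rightarrow> 'a)"
begin

lemma inv_r: "g \<in> G \<Longrightarrow> g ** matrix_inv g = mat 1"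
  using G_inv matrix_inv_props by blast
lemma inv_l: "g \<in> G \<Longrightarrow> matrix_inv g ** g = mat 1"
  using G_inv matrix_inv_props by blast

lemma minv_mult: "g \<in> G \<Longrightarrow> h \<in> G \<Longrightarrow> matrix_inv (g ** h) = matrix_inv h ** matrix_inv g"
proof (rule matrix_inv_unique)
  assume g: "g \<in> G" and h: "h \<in> G"
  have "g ** h ** (matrix_inv h ** matrix_inv g) = g ** (h ** matrix_inv h) ** matrix_inv g"
    by (simp add: matrix_mul_assoc)
  then show "g ** h ** (matrix_inv h ** matrix_inv g) = mat 1" using g h by (simp add: inv_r)
  have "matrix_inv h ** matrix_inv g ** (g ** h) = matrix_inv h ** (matrix_inv g ** g) ** h"
    by (simp add: matrix_mul_assoc)
  then show "matrix_inv h ** matrix_inv g ** (g ** h) = mat 1" using g h by (simp add: inv_l)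
qed

lemma minv_minv: "g \<in> G \<Longrightarrow> matrix_inv (matrix_inv g) = g"
  by (rule matrix_inv_unique) (simp_all add: inv_r inv_l)

lemma minv_one[simp]: "matrix_inv (mat 1 :: 'a mat3) = mat 1"
  by (rule matrix_inv_unique) simp_all

lemma minv_eqI: "g \<in> G \<Longrightarrow> g ** h = mat 1 \<Longrightarrow> matrix_inv g = h"
proof -
  assume g: "g \<in> G" and e: "g ** h = mat 1"
  have "matrix_inv g = matrix_inv g ** (g ** h)" using e by simp
  also have "\<dots> = h" by (simp add: matrix_mul_assoc inv_l g)
  finally show ?thesis .
qed

lemma conjset_one[simp]: "conjset (mat 1) (S :: 'a mat3 set) = S"
  by (simp add: conjset_def)

lemma conjset_mult: "g \<in> G \<Longrightarrow> h \<in> G \<Longrightarrow> conjset (g ** h) S = conjset g (conjset h S)"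
  by (auto simp: conjset_def image_image minv_mult matrix_mul_assoc)

lemma conjset_inv: "g \<in> G \<Longrightarrow> conjset (matrix_inv g) (conjset g S) = S"
  by (simp add: conjset_mult[symmetric] G_minv inv_l)

lemma conjset_inv2: "g \<in> G \<Longrightarrow> conjset g (conjset (matrix_inv g) S) = S"
  by (simp add: conjset_mult[symmetric] G_minv inv_r)

lemma conjset_inj: "g \<in> G \<Longrightarrow> conjset g A = conjset g B \<Longrightarrow> A = B"
  by (metis conjset_inv)

lemma conjset_mono: "A \<subseteq> B \<Longrightarrow> conjset g A \<subseteq> conjset g B"
  by (auto simp: conjset_def)

lemma conjset_G: "g \<in> G \<Longrightarrow> conjset g G = G"
proof
  assume g: "g \<in> G"
  show "conjset g G \<subseteq> G" by (auto simp: conjset_def G_mult G_minv g)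
  show "G \<subseteq> conjset g G"
  proof
    fix y assume y: "y \<in> G"
    have "y = g ** (matrix_inv g ** y ** g) ** matrix_inv g"
      by (simp add: matrix_mul_assoc inv_r g) (simp add: matrix_mul_assoc[symmetric] inv_r g)
    then show "y \<in> conjset g G" unfolding conjset_def using y g by (auto intro: G_mult G_minv)
  qed
qed

lemma conjset_eqI:
  assumes g: "g \<in> G" and A: "A \<subseteq> G" and B: "B \<subseteq> G"
    and AB: "\<And>x. x \<in> A \<Longrightarrow> g ** x ** matrix_inv g \<in> B"
    and BA: "\<And>y. y \<in> B \<Longrightarrow> matrix_inv g ** y ** g \<in> A"
  shows "conjset g A = B"
proof
  show "conjset g A \<subseteq> B" using AB by (auto simp: conjset_def)
  show "B \<subseteq> conjset g A"
  proof
    fix y assume y: "y \<in> B"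
    have "y = g ** (matrix_inv g ** y ** g) ** matrix_inv g"
      by (simp add: matrix_mul_assoc inv_r g) (simp add: matrix_mul_assoc[symmetric] inv_r g)
    then show "y \<in> conjset g A" unfolding conjset_def using BA[OF y] by auto
  qed
qed

lemma subgroup_conj: "is_subgroup G S \<Longrightarrow> g \<in> G \<Longrightarrow> is_subgroup G (conjset g S)"
proof -
  assume S: "is_subgroup G S" and g: "g \<in> G"
  have SG: "S \<subseteq> G" using S by (simp add: is_subgroup_def)
  show ?thesis unfolding is_subgroup_def
  proof (intro conjI ballI)
    show "conjset g S \<subseteq> G" using SG conjset_G[OF g] conjset_mono by blast
    show "mat 1 \<in> conjset g S" using S g unfolding conjset_def is_subgroup_def
      by (auto intro!: image_eqI[of _ _ "mat 1"] simp: inv_r)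
  next
    fix x y assume "x \<in> conjset g S" "y \<in> conjset g S"
    then obtain a b where ab: "a \<in> S" "b \<in> S" "x = g ** a ** matrix_inv g" "y = g ** b ** matrix_inv g"
      by (auto simp: conjset_def)
    have "x ** y = g ** (a ** (matrix_inv g ** g) ** b) ** matrix_inv g"
      by (simp add: ab matrix_mul_assoc)
    also have "\<dots> = g ** (a ** b) ** matrix_inv g" by (simp add: inv_l g)
    finally show "x ** y \<in> conjset g S" using S ab by (auto simp: conjset_def is_subgroup_def)
  next
    fix x assume "x \<in> conjset g S"
    then obtain a where a: "a \<in> S" "x = g ** a ** matrix_inv g" by (auto simp: conjset_def)
    have aG: "a \<in> G" using a SG by auto
    have "matrix_inv x = g ** matrix_inv a ** matrix_inv g"
      using a g aG by (simp add: minv_mult G_mult G_minv minv_minv matrix_mul_assoc)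
    then show "matrix_inv x \<in> conjset g S" using S a by (auto simp: conjset_def is_subgroup_def)
  qed
qed

lemma subgroup_conjset_self: "is_subgroup G S \<Longrightarrow> q \<in> S \<Longrightarrow> conjset q S = S"
proof -
  assume S: "is_subgroup G S" and q: "q \<in> S"
  have SG: "S \<subseteq> G" using S by (simp add: is_subgroup_def)
  show ?thesis
  proof (rule conjset_eqI)
    show "q \<in> G" "S \<subseteq> G" "S \<subseteq> G" using q SG by auto
    show "q ** x ** matrix_inv q \<in> S" if "x \<in> S" for x
      using S q that unfolding is_subgroup_def by blast
    show "matrix_inv q ** x ** q \<in> S" if "x \<in> S" for x
      using S q that unfolding is_subgroup_def by blast
  qed
qed

lemma not_G_zero_row: "g \<in> G \<Longrightarrow> \<forall>s. g$r$s = 0 \<Longrightarrow> False"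
proof -
  assume g: "g \<in> G" and z: "\<forall>s. g$r$s = 0"
  have "(g ** matrix_inv g)$r$r = 1" using inv_r[OF g] by (simp add: mat1_entry)
  moreover have "(g ** matrix_inv g)$r$r = 0" using z by (simp add: mm_entry)
  ultimately show False by simp
qed

lemma not_G_zero_col: "g \<in> G \<Longrightarrow> \<forall>s. g$s$c = 0 \<Longrightarrow> False"
proof -
  assume g: "g \<in> G" and z: "\<forall>s. g$s$c = 0"
  have "(matrix_inv g ** g)$c$c = 1" using inv_l[OF g] by (simp add: mat1_entry)
  moreover have "(matrix_inv g ** g)$c$c = 0" using z by (simp add: mm_entry)
  ultimately show False by simp
qed

lemma RowP_sub: "RowP G r \<subseteq> G" by (auto simp: RowP_def)
lemma ColP_sub: "ColP G r \<subseteq> G" by (auto simp: ColP_def)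

lemma RowP_minv: "x \<in> RowP G r \<Longrightarrow> matrix_inv x \<in> RowP G r"
proof -
  assume x: "x \<in> RowP G r"
  then have xG: "x \<in> G" and z: "\<forall>s. s \<noteq> r \<longrightarrow> x$r$s = 0" by (auto simp: RowP_def)
  have e: "(x ** matrix_inv x)$r$s = x$r$r * matrix_inv x$r$s" for s
    by (rule RowP_mult_entry[OF z])
  have nz: "x$r$r \<noteq> 0" using e[of r] inv_r[OF xG] by (auto simp: mat1_entry)
  have "\<forall>s. s \<noteq> r \<longrightarrow> matrix_inv x$r$s = 0"
  proof (intro allI impI)
    fix s assume "s \<noteq> r"
    then have "x$r$r * matrix_inv x$r$s = 0" using e[of s] inv_r[OF xG] by (simp add: mat1_entry)
    then show "matrix_inv x$r$s = 0" using nz by simp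
  qed
  then show ?thesis using G_minv[OF xG] by (simp add: RowP_def)
qed

lemma ColP_minv: "x \<in> ColP G c \<Longrightarrow> matrix_inv x \<in> ColP G c"
proof -
  assume x: "x \<in> ColP G c"
  then have xG: "x \<in> G" and z: "\<forall>s. s \<noteq> c \<longrightarrow> x$s$c = 0" by (auto simp: ColP_def)
  have e: "(matrix_inv x ** x)$s$c = matrix_inv x$s$c * x$c$c" for s
    by (rule ColP_mult_entry[OF z])
  have nz: "x$c$c \<noteq> 0" using e[of c] inv_l[OF xG] by (auto simp: mat1_entry)
  have "\<forall>s. s \<noteq> c \<longrightarrow> matrix_inv x$s$c = 0"
  proof (intro allI impI)
    fix s assume "s \<noteq> c"
    then have "matrix_inv x$s$c * x$c$c = 0" using e[of s] inv_l[OF xG] by (simp add: mat1_entry)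
    then show "matrix_inv x$s$c = 0" using nz by simp
  qed
  then show ?thesis using G_minv[OF xG] by (simp add: ColP_def)
qed

lemma RowP_subgroup: "is_subgroup G (RowP G r)"
  unfolding is_subgroup_def
proof (intro conjI ballI)
  show "RowP G r \<subseteq> G" by (rule RowP_sub)
  show "mat 1 \<in> RowP G r" using G_one by (auto simp: RowP_def mat1_entry)
  show "x ** y \<in> RowP G r" if "x \<in> RowP G r" "y \<in> RowP G r" for x y
    using that RowP_mult_entry[of r x y] G_mult by (auto simp: RowP_def)
  show "matrix_inv x \<in> RowP G r" if "x \<in> RowP G r" for x using that by (rule RowP_minv)
qed

lemma ColP_subgroup: "is_subgroup G (ColP G c)"
  unfolding is_subgroup_def
proof (intro conjI ballI)
  show "ColP G c \<subseteq> G" by (rule ColP_sub)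
  show "mat 1 \<in> ColP G c" using G_one by (auto simp: ColP_def mat1_entry)
  show "x ** y \<in> ColP G c" if "x \<in> ColP G c" "y \<in> ColP G c" for x y
    using that ColP_mult_entry[of c y x] G_mult by (auto simp: ColP_def)
  show "matrix_inv x \<in> ColP G c" if "x \<in> ColP G c" for x using that by (rule ColP_minv)
qed

end


context sgrp begin

lemma J_G: "Jmat \<in> G"
proof -
  have "(Jmat :: 'a mat3) = (U I2 I3 1 ** U I3 I2 (-1) ** U I2 I3 1) ** (U I2 I3 1 ** U I3 I2 (-1) ** U I2 I3 1)"
    by (simp add: U_M3 J_M3 M3_mult)
  also have "\<dots> \<in> G" by (intro G_mult G_U) simp_all
  finally show ?thesis .
qed

lemma JJ_right[simp]: "(A :: 'a mat3) ** Jmat ** Jmat = A"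
  by (simp flip: matrix_mul_assoc)

lemma inv_right_cancel: "g \<in> G \<Longrightarrow> A ** g ** matrix_inv g = A"
  by (simp flip: matrix_mul_assoc add: inv_r)
lemma inv_right_cancel2: "g \<in> G \<Longrightarrow> A ** matrix_inv g ** g = A"
  by (simp flip: matrix_mul_assoc add: inv_l)

lemma minv_J[simp]: "matrix_inv (Jmat :: 'a mat3) = Jmat"
  by (rule minv_eqI[OF J_G]) simp

lemma minv_ctrans: "g \<in> G \<Longrightarrow> matrix_inv (ctrans g) = ctrans (matrix_inv g)"
  by (rule minv_eqI) (simp_all add: G_ctrans ctrans_mult[symmetric] inv_l)

lemma theta_G: "g \<in> G \<Longrightarrow> theta g \<in> G"
  by (simp add: theta_def G_ctrans G_minv)

lemma theta_mult: "g \<in> G \<Longrightarrow> h \<in> G \<Longrightarrow> theta (g ** h) = theta g ** theta h"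
  by (simp add: theta_def minv_mult ctrans_mult)

lemma theta_theta: "g \<in> G \<Longrightarrow> theta (theta g) = g"
  by (simp add: theta_def minv_ctrans G_minv minv_minv)

lemma theta_minv: "g \<in> G \<Longrightarrow> theta (matrix_inv g) = matrix_inv (theta g)"
  by (simp add: theta_def minv_ctrans G_minv minv_minv)

lemma theta_J[simp]: "theta (Jmat :: 'a mat3) = Jmat"
  by (simp add: theta_def)

lemma theta_one[simp]: "theta (mat 1 :: 'a mat3) = mat 1"
  by (simp add: theta_def)

lemma sigma_G: "g \<in> G \<Longrightarrow> sigma g \<in> G"
  by (simp add: sigma_def G_mult J_G theta_G)

lemma sigma_mult: "g \<in> G \<Longrightarrow> h \<in> G \<Longrightarrow> sigma (g ** h) = sigma g ** sigma h"
proof -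
  assume g: "g \<in> G" and h: "h \<in> G"
  have "sigma g ** sigma h = Jmat ** theta g ** (Jmat ** Jmat) ** theta h ** Jmat"
    by (simp add: sigma_def matrix_mul_assoc)
  also have "\<dots> = sigma (g ** h)" by (simp add: sigma_def theta_mult g h matrix_mul_assoc)
  finally show ?thesis by simp
qed

lemma sigma_one[simp]: "sigma (mat 1 :: 'a mat3) = mat 1"
  by (simp add: sigma_def)

lemma sigma_sigma: "g \<in> G \<Longrightarrow> sigma (sigma g) = g"
proof -
  assume g: "g \<in> G"
  have "sigma (sigma g) = Jmat ** (theta Jmat ** theta (theta g) ** theta Jmat) ** Jmat"
    by (simp add: sigma_def theta_mult J_G theta_G g G_mult)
  also have "\<dots> = (Jmat ** Jmat) ** g ** (Jmat ** Jmat)"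
    by (simp add: theta_theta g matrix_mul_assoc)
  finally show ?thesis by simp
qed

lemma sigma_minv: "g \<in> G \<Longrightarrow> sigma (matrix_inv g) = matrix_inv (sigma g)"
proof -
  assume g: "g \<in> G"
  have "sigma g ** sigma (matrix_inv g) = mat 1"
    by (simp add: sigma_mult[symmetric] g G_minv inv_r)
  then show ?thesis by (simp add: minv_eqI sigma_G g)
qed

lemma sigma_conjset: "X \<subseteq> G \<Longrightarrow> g \<in> G \<Longrightarrow> sigma ` conjset g X = conjset (sigma g) (sigma ` X)"
proof -
  assume X: "X \<subseteq> G" and g: "g \<in> G"
  have "sigma (g ** x ** matrix_inv g) = sigma g ** sigma x ** matrix_inv (sigma g)" if "x \<in> X" for x
    using that X g by (simp add: sigma_mult G_mult G_minv sigma_minv subsetD)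
  then show ?thesis unfolding conjset_def by (auto simp: image_image intro!: image_cong)
qed

lemma J_conj_entry: "(Jmat ** (x :: 'a mat3) ** Jmat)$i$j = Jmat$i$i * x$i$j * Jmat$j$j"
  by (cases i; cases j; simp add: mm_entry Jmat_entry)

lemma theta_RowP_mem: "x \<in> RowP G r \<Longrightarrow> theta x \<in> ColP G r"
proof -
  assume x: "x \<in> RowP G r"
  then have "matrix_inv x \<in> RowP G r" by (rule RowP_minv)
  then show ?thesis using x by (auto simp: RowP_def ColP_def theta_def ctrans_entry G_ctrans G_minv)
qed

lemma theta_ColP_mem: "x \<in> ColP G r \<Longrightarrow> theta x \<in> RowP G r"
proof -
  assume x: "x \<in> ColP G r"
  then have "matrix_inv x \<in> ColP G r" by (rule ColP_minv)
  then show ?thesis using x by (auto simp: RowP_def ColP_def theta_def ctrans_entry G_ctrans G_minv)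
qed

lemma sigma_RowP_mem: "x \<in> RowP G r \<Longrightarrow> sigma x \<in> ColP G r"
  using theta_RowP_mem[of x r]
  by (auto simp: ColP_def sigma_def J_conj_entry G_mult J_G)

lemma sigma_ColP_mem: "x \<in> ColP G r \<Longrightarrow> sigma x \<in> RowP G r"
  using theta_ColP_mem[of x r]
  by (auto simp: RowP_def sigma_def J_conj_entry G_mult J_G)

lemma theta_RowP: "theta ` RowP G r = ColP G r"
proof
  show "theta ` RowP G r \<subseteq> ColP G r" using theta_RowP_mem by blast
  show "ColP G r \<subseteq> theta ` RowP G r"
  proof
    fix y assume y: "y \<in> ColP G r"
    then have "y \<in> G" using ColP_sub by blast
    then have "y = theta (theta y)" by (simp add: theta_theta)
    then show "y \<in> theta ` RowP G r" using theta_ColP_mem[OF y] by blast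
  qed
qed

lemma theta_ColP: "theta ` ColP G r = RowP G r"
proof
  show "theta ` ColP G r \<subseteq> RowP G r" using theta_ColP_mem by blast
  show "RowP G r \<subseteq> theta ` ColP G r"
  proof
    fix y assume y: "y \<in> RowP G r"
    then have "y \<in> G" using RowP_sub by blast
    then have "y = theta (theta y)" by (simp add: theta_theta)
    then show "y \<in> theta ` ColP G r" using theta_RowP_mem[OF y] by blast
  qed
qed

lemma sigma_RowP: "sigma ` RowP G r = ColP G r"
proof
  show "sigma ` RowP G r \<subseteq> ColP G r" using sigma_RowP_mem by blast
  show "ColP G r \<subseteq> sigma ` RowP G r"
  proof
    fix y assume y: "y \<in> ColP G r"
    then have "y \<in> G" using ColP_sub by blast
    then have "y = sigma (sigma y)" by (simp add: sigma_sigma)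
    then show "y \<in> sigma ` RowP G r" using sigma_ColP_mem[OF y] by blast
  qed
qed

lemma sigma_ColP: "sigma ` ColP G r = RowP G r"
proof
  show "sigma ` ColP G r \<subseteq> RowP G r" using sigma_ColP_mem by blast
  show "RowP G r \<subseteq> sigma ` ColP G r"
  proof
    fix y assume y: "y \<in> RowP G r"
    then have "y \<in> G" using RowP_sub by blast
    then have "y = sigma (sigma y)" by (simp add: sigma_sigma)
    then show "y \<in> sigma ` ColP G r" using sigma_RowP_mem[OF y] by blast
  qed
qed

lemma U_RowP: "i \<noteq> j \<Longrightarrow> i \<noteq> r \<Longrightarrow> U i j t \<in> RowP G r"
  using G_U by (auto simp: RowP_def U_entry)

lemma U_ColP: "i \<noteq> j \<Longrightarrow> j \<noteq> c \<Longrightarrow> U i j t \<in> ColP G c"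
  using G_U by (auto simp: ColP_def U_entry)

lemma norm_RowP:
  assumes k: "k \<in> G" and N: "conjset k (RowP G r) = RowP G r"
  shows "k \<in> RowP G r"
proof -
  have "k$r$s = 0" if s: "s \<noteq> r" for s
  proof -
    have x: "U s r 1 \<in> RowP G r" using s by (simp add: U_RowP)
    then have "k ** U s r 1 ** matrix_inv k \<in> RowP G r" using N unfolding conjset_def by blast
    then obtain y where y: "y \<in> RowP G r" "y = k ** U s r 1 ** matrix_inv k" by blast
    have "y ** k = k ** U s r 1" using y(2) by (simp add: matrix_mul_assoc[symmetric] inv_l k)
    then have e: "(y ** k)$r$m = (k ** U s r 1)$r$m" for m by simp
    have z: "\<forall>s. s \<noteq> r \<longrightarrow> y$r$s = 0" using y(1) by (simp add: RowP_def)
    have "y$r$r * k$r$s = k$r$s" using e[of s] s by (simp add: RowP_mult_entry[OF z] mult_U_entry)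
    moreover have "y$r$r * k$r$r = k$r$r + k$r$s" using e[of r] s by (simp add: RowP_mult_entry[OF z] mult_U_entry)
    ultimately show ?thesis by (rule key_cancel_l)
  qed
  then show ?thesis using k by (simp add: RowP_def)
qed

lemma norm_ColP:
  assumes k: "k \<in> G" and N: "conjset k (ColP G c) = ColP G c"
  shows "k \<in> ColP G c"
proof -
  have "k$s$c = 0" if s: "s \<noteq> c" for s
  proof -
    have x: "U c s 1 \<in> ColP G c" using s by (simp add: U_ColP)
    then have "U c s 1 \<in> conjset k (ColP G c)" using N by simp
    then obtain y where y: "y \<in> ColP G c" "U c s 1 = k ** y ** matrix_inv k" by (auto simp: conjset_def)
    have "U c s 1 ** k = k ** y" using y(2) by (simp add: matrix_mul_assoc[symmetric] inv_l k)
    then have e: "(U c s 1 ** k)$m$c = (k ** y)$m$c" for m by simp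
    have z: "\<forall>s. s \<noteq> c \<longrightarrow> y$s$c = 0" using y(1) by (simp add: ColP_def)
    have "k$s$c * y$c$c = k$s$c" using e[of s] s by (simp add: ColP_mult_entry[OF z] U_mult_entry)
    moreover have "k$c$c * y$c$c = k$c$c + k$s$c" using e[of c] s by (simp add: ColP_mult_entry[OF z] U_mult_entry)
    ultimately show ?thesis by (rule key_cancel_r)
  qed
  then show ?thesis using k by (simp add: ColP_def)
qed

lemma not_conj_Q1_Q3:
  assumes g: "g \<in> G" shows "conjset g (RowP G I3) \<noteq> ColP G I1"
proof
  assume c: "conjset g (RowP G I3) = ColP G I1"
  define u where "u = matrix_inv g"
  have u: "u \<in> G" using g by (simp add: u_def G_minv)
  have N: "conjset u (ColP G I1) = RowP G I3" unfolding u_def by (metis c conjset_inv[OF g])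
  have step: "\<exists>y. (\<forall>j. y * u$I3$j = (u ** x)$I3$j)" if x: "x \<in> ColP G I1" for x
  proof -
    have "u ** x ** matrix_inv u \<in> RowP G I3" using N x unfolding conjset_def by blast
    then obtain y where y: "y \<in> RowP G I3" "y = u ** x ** matrix_inv u" by blast
    have "y ** u = u ** x" using y(2) by (simp add: matrix_mul_assoc[symmetric] inv_l u)
    then have e: "(y ** u)$I3$m = (u ** x)$I3$m" for m by simp
    have z: "\<forall>s. s \<noteq> I3 \<longrightarrow> y$I3$s = 0" using y(1) by (simp add: RowP_def)
    have "y$I3$I3 * u$I3$m = (u ** x)$I3$m" for m using e[of m] by (simp add: RowP_mult_entry[OF z])
    then show ?thesis by blast
  qed
  obtain y1 where y1: "\<And>j. y1 * u$I3$j = (u ** U I1 I2 1)$I3$j"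
    using step[of "U I1 I2 1"] by (auto simp: U_ColP)
  have u31: "u$I3$I1 = 0"
    using y1[of I1] y1[of I2] by (intro key_cancel_l[of y1 _ "u$I3$I2"]) (auto simp: mult_U_entry)
  obtain y2 where y2: "\<And>j. y2 * u$I3$j = (u ** U I2 I3 1)$I3$j"
    using step[of "U I2 I3 1"] by (auto simp: U_ColP)
  have u32: "u$I3$I2 = 0"
    using y2[of I2] y2[of I3] by (intro key_cancel_l[of y2 _ "u$I3$I3"]) (auto simp: mult_U_entry)
  obtain y3 where y3: "\<And>j. y3 * u$I3$j = (u ** U I3 I2 1)$I3$j"
    using step[of "U I3 I2 1"] by (auto simp: U_ColP)
  have u33: "u$I3$I3 = 0"
    using y3[of I3] y3[of I2] u32 by (auto simp: mult_U_entry)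
  show False using not_G_zero_row[OF u, of I3] u31 u32 u33 by (auto simp: ix_all)
qed

end


definition s1m :: "'a::ring_1 mat3" where "s1m = M3 0 (-1) 0 1 0 0 0 0 1"
definition s2m :: "'a::ring_1 mat3" where "s2m = M3 1 0 0 0 0 (-1) 0 1 0"
definition wcm :: "'a::ring_1 mat3" where "wcm = M3 0 0 1 1 0 0 0 1 0"

lemma P0_iff: "x \<in> min_parabolic G \<longleftrightarrow> x \<in> G \<and> x$I2$I1 = 0 \<and> x$I3$I1 = 0 \<and> x$I3$I2 = 0"
proof -
  have "(\<forall>i j. ixn j < ixn i \<longrightarrow> x $ i $ j = 0) \<longleftrightarrow> x$I2$I1 = 0 \<and> x$I3$I1 = 0 \<and> x$I3$I2 = 0"
    by (auto simp: ix_all)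
  then show ?thesis by (simp add: min_parabolic_def)
qed

context sgrp begin

lemma s1_G: "s1m \<in> G"
proof -
  have "(s1m :: 'a mat3) = U I1 I2 (-1) ** U I2 I1 1 ** U I1 I2 (-1)"
    by (simp add: U_M3 s1m_def M3_mult)
  also have "\<dots> \<in> G" by (intro G_mult G_U) simp_all
  finally show ?thesis .
qed

lemma s2_G: "s2m \<in> G"
proof -
  have "(s2m :: 'a mat3) = U I2 I3 (-1) ** U I3 I2 1 ** U I2 I3 (-1)"
    by (simp add: U_M3 s2m_def M3_mult)
  also have "\<dots> \<in> G" by (intro G_mult G_U) simp_all
  finally show ?thesis .
qed

lemma wc_G: "wcm \<in> G"
proof -
  have "(wcm :: 'a mat3) = s1m ** s2m" by (simp add: s1m_def s2m_def wcm_def M3_mult)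
  also have "\<dots> \<in> G" by (rule G_mult[OF s1_G s2_G])
  finally show ?thesis .
qed

lemma minv_s1: "matrix_inv (s1m :: 'a mat3) = M3 0 1 0 (-1) 0 0 0 0 1"
  by (rule minv_eqI[OF s1_G]) (simp add: s1m_def M3_mult mat1_M3)

lemma minv_wc: "matrix_inv (wcm :: 'a mat3) = M3 0 1 0 0 0 1 1 0 0"
  by (rule minv_eqI[OF wc_G]) (simp add: wcm_def M3_mult mat1_M3)

lemma conj_wc_RowP: "conjset wcm (RowP G I3) = RowP G I1"
proof (rule conjset_eqI[OF wc_G RowP_sub RowP_sub])
  fix x assume x: "x \<in> RowP G I3"
  then show "wcm ** x ** matrix_inv wcm \<in> RowP G I1"
    using G_mult[OF G_mult[OF wc_G] G_minv[OF wc_G]]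
    by (simp add: RowP_def ix_all minv_wc) (simp add: wcm_def mm_entry)
next
  fix x assume x: "x \<in> RowP G I1"
  then show "matrix_inv wcm ** x ** wcm \<in> RowP G I3"
    using G_mult[OF G_mult[OF G_minv[OF wc_G]] wc_G]
    by (simp add: RowP_def ix_all minv_wc) (simp add: wcm_def mm_entry)
qed

lemma conj_wc_ColP: "conjset wcm (ColP G I3) = ColP G I1"
proof (rule conjset_eqI[OF wc_G ColP_sub ColP_sub])
  fix x assume x: "x \<in> ColP G I3"
  then show "wcm ** x ** matrix_inv wcm \<in> ColP G I1"
    using G_mult[OF G_mult[OF wc_G] G_minv[OF wc_G]]
    by (simp add: ColP_def ix_all minv_wc) (simp add: wcm_def mm_entry)
next
  fix x assume x: "x \<in> ColP G I1"
  then show "matrix_inv wcm ** x ** wcm \<in> ColP G I3"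
    using G_mult[OF G_mult[OF G_minv[OF wc_G]] wc_G]
    by (simp add: ColP_def ix_all minv_wc) (simp add: wcm_def mm_entry)
qed

lemma conj_s1_ColP: "conjset s1m (ColP G I1) = ColP G I2"
proof (rule conjset_eqI[OF s1_G ColP_sub ColP_sub])
  fix x assume x: "x \<in> ColP G I1"
  then show "s1m ** x ** matrix_inv s1m \<in> ColP G I2"
    using G_mult[OF G_mult[OF s1_G] G_minv[OF s1_G]]
    by (simp add: ColP_def ix_all minv_s1) (simp add: s1m_def mm_entry)
next
  fix x assume x: "x \<in> ColP G I2"
  then show "matrix_inv s1m ** x ** s1m \<in> ColP G I1"
    using G_mult[OF G_mult[OF G_minv[OF s1_G]] s1_G]
    by (simp add: ColP_def ix_all minv_s1) (simp add: s1m_def mm_entry)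
qed

lemma conj_s1_RowP: "conjset s1m (RowP G I1) = RowP G I2"
proof (rule conjset_eqI[OF s1_G RowP_sub RowP_sub])
  fix x assume x: "x \<in> RowP G I1"
  then show "s1m ** x ** matrix_inv s1m \<in> RowP G I2"
    using G_mult[OF G_mult[OF s1_G] G_minv[OF s1_G]]
    by (simp add: RowP_def ix_all minv_s1) (simp add: s1m_def mm_entry)
next
  fix x assume x: "x \<in> RowP G I2"
  then show "matrix_inv s1m ** x ** s1m \<in> RowP G I1"
    using G_mult[OF G_mult[OF G_minv[OF s1_G]] s1_G]
    by (simp add: RowP_def ix_all minv_s1) (simp add: s1m_def mm_entry)
qed

end


locale psub = sgrp G for G :: "('a::qfield) mat3 set" +
  fixes S :: "'a mat3 set"
  assumes S_sub: "is_subgroup G S" and P0S: "min_parabolic G \<subseteq> S"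
begin

lemma SG: "x \<in> S \<Longrightarrow> x \<in> G" using S_sub by (auto simp: is_subgroup_def)
lemma Smul: "x \<in> S \<Longrightarrow> y \<in> S \<Longrightarrow> x ** y \<in> S" using S_sub by (auto simp: is_subgroup_def)
lemma Sinv: "x \<in> S \<Longrightarrow> matrix_inv x \<in> S" using S_sub by (auto simp: is_subgroup_def)

lemma P0_in_S: "x \<in> G \<Longrightarrow> x$I2$I1 = 0 \<Longrightarrow> x$I3$I1 = 0 \<Longrightarrow> x$I3$I2 = 0 \<Longrightarrow> x \<in> S"
  using P0S by (auto simp: P0_iff)

lemma U12S: "U I1 I2 t \<in> S" and U13S: "U I1 I3 t \<in> S" and U23S: "U I2 I3 t \<in> S"
  by (auto intro!: P0_in_S G_U simp: U_entry)

lemma left_back: "u \<in> S \<Longrightarrow> g \<in> G \<Longrightarrow> u ** g \<in> S \<Longrightarrow> g \<in> S"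
proof -
  assume u: "u \<in> S" and g: "g \<in> G" and ug: "u ** g \<in> S"
  have "g = matrix_inv u ** (u ** g)" by (simp add: matrix_mul_assoc inv_l SG u)
  then show ?thesis using Smul[OF Sinv[OF u] ug] by simp
qed

lemma comm31: "U I3 I1 s ** U I1 I2 1 ** U I3 I1 (-s) ** U I1 I2 (-1) = (U I3 I2 s :: 'a mat3)"
  by (simp add: U_M3 M3_mult algebra_simps)

lemma comm21: "U I2 I3 1 ** U I3 I1 s ** U I2 I3 (-1) ** U I3 I1 (-s) = (U I2 I1 s :: 'a mat3)"
  by (simp add: U_M3 M3_mult algebra_simps)

lemma comm_32_21: "U I3 I2 1 ** U I2 I1 s ** U I3 I2 (-1) ** U I2 I1 (-s) = (U I3 I1 s :: 'a mat3)"
  by (simp add: U_M3 M3_mult algebra_simps)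

lemma U31_to_U32: "(\<And>s. U I3 I1 s \<in> S) \<Longrightarrow> U I3 I2 s \<in> S"
  by (metis comm31 Smul U12S)

lemma U31_to_U21: "(\<And>s. U I3 I1 s \<in> S) \<Longrightarrow> U I2 I1 s \<in> S"
  by (metis comm21 Smul U23S)

lemma U32_21_to_31: "(\<And>s. U I3 I2 s \<in> S) \<Longrightarrow> (\<And>s. U I2 I1 s \<in> S) \<Longrightarrow> U I3 I1 s \<in> S"
  by (metis comm_32_21 Smul)

lemma not_G_cols12: "g \<in> G \<Longrightarrow> g$I2$I1 = 0 \<Longrightarrow> g$I3$I1 = 0 \<Longrightarrow> g$I2$I2 = 0 \<Longrightarrow> g$I3$I2 = 0 \<Longrightarrow> False"
proof -
  assume g: "g \<in> G" and z: "g$I2$I1 = 0" "g$I3$I1 = 0" "g$I2$I2 = 0" "g$I3$I2 = 0"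
  let ?h = "matrix_inv g"
  have e1: "?h$I1$I1 * g$I1$I1 = 1" using arg_cong[OF inv_l[OF g], of "\<lambda>m. m$I1$I1"] z
    by (simp add: mm_entry mat1_entry)
  have e2: "?h$I1$I1 * g$I1$I2 = 0" using arg_cong[OF inv_l[OF g], of "\<lambda>m. m$I1$I2"] z
    by (simp add: mm_entry mat1_entry)
  have "?h$I1$I1 \<noteq> 0" using e1 by auto
  then have "g$I1$I2 = 0" using e2 by simp
  then show False using not_G_zero_col[OF g, of I2] z by (auto simp: ix_all)
qed

lemma A1: assumes u32: "\<And>t. U I3 I2 t \<in> S"
  shows "g \<in> G \<Longrightarrow> g$I2$I1 = 0 \<Longrightarrow> g$I3$I1 = 0 \<Longrightarrow> g$I2$I2 \<noteq> 0 \<Longrightarrow> g \<in> S"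
proof -
  assume g: "g \<in> G" and z: "g$I2$I1 = 0" "g$I3$I1 = 0" and nz: "g$I2$I2 \<noteq> 0"
  let ?u = "U I3 I2 (-(g$I3$I2 * rinv (g$I2$I2)))"
  have "?u ** g \<in> S"
    using z nz by (intro P0_in_S G_mult G_U g) (simp_all add: U_mult_entry mult_rinv_cancel2)
  then show ?thesis using left_back[OF u32 g] by blast
qed

lemma A2: assumes u32: "\<And>t. U I3 I2 t \<in> S"
  shows "g \<in> G \<Longrightarrow> g$I2$I1 = 0 \<Longrightarrow> g$I3$I1 = 0 \<Longrightarrow> g \<in> S"
proof -
  assume g: "g \<in> G" and z: "g$I2$I1 = 0" "g$I3$I1 = 0"
  show ?thesis
  proof (cases "g$I2$I2 = 0")
    case False then show ?thesis using A1[OF u32 g z] by blast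
  next
    case True
    then have "g$I3$I2 \<noteq> 0" using not_G_cols12[OF g z(1,2) True] by blast
    then have "U I2 I3 1 ** g \<in> S"
      using z True by (intro A1[OF u32] G_mult G_U g) (simp_all add: U_mult_entry)
    then show ?thesis using left_back[OF U23S g] by blast
  qed
qed

lemma ColP1_S: "(\<And>t. U I3 I2 t \<in> S) \<Longrightarrow> ColP G I1 \<subseteq> S"
  using A2 by (auto simp: ColP_def ix_all)

lemma A3: assumes u32: "\<And>t. U I3 I2 t \<in> S" and u21: "\<And>t. U I2 I1 t \<in> S"
  shows "g \<in> G \<Longrightarrow> g$I1$I1 \<noteq> 0 \<Longrightarrow> g \<in> S"
proof -
  assume g: "g \<in> G" and nz: "g$I1$I1 \<noteq> 0"
  let ?u = "U I3 I1 (-(g$I3$I1 * rinv (g$I1$I1)))" and ?v = "U I2 I1 (-(g$I2$I1 * rinv (g$I1$I1)))"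
  have "?u ** (?v ** g) \<in> S"
    using nz by (intro A2[OF u32] G_mult G_U g) (simp_all add: U_mult_entry mult_rinv_cancel2)
  then have "?v ** g \<in> S" using left_back[OF U32_21_to_31[OF u32 u21]] G_mult[OF G_U g] by simp
  then show ?thesis using left_back[OF u21 g] by blast
qed

lemma A4: assumes u32: "\<And>t. U I3 I2 t \<in> S" and u21: "\<And>t. U I2 I1 t \<in> S"
  shows "g \<in> G \<Longrightarrow> g \<in> S"
proof -
  assume g: "g \<in> G"
  consider "g$I1$I1 \<noteq> 0" | "g$I1$I1 = 0" "g$I2$I1 \<noteq> 0" | "g$I1$I1 = 0" "g$I2$I1 = 0" "g$I3$I1 \<noteq> 0"
    | "g$I1$I1 = 0" "g$I2$I1 = 0" "g$I3$I1 = 0" by blast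
  then show ?thesis
  proof cases
    case 1 then show ?thesis using A3[OF u32 u21 g] by blast
  next
    case 2
    then have "U I1 I2 1 ** g \<in> S" by (intro A3[OF u32 u21] G_mult G_U g) (simp_all add: U_mult_entry)
    then show ?thesis using left_back[OF U12S g] by blast
  next
    case 3
    then have "U I1 I3 1 ** g \<in> S" by (intro A3[OF u32 u21] G_mult G_U g) (simp_all add: U_mult_entry)
    then show ?thesis using left_back[OF U13S g] by blast
  next
    case 4
    then show ?thesis using not_G_zero_col[OF g, of I1] by (auto simp: ix_all)
  qed
qed

lemma B1: assumes u21: "\<And>t. U I2 I1 t \<in> S"
  shows "g \<in> G \<Longrightarrow> g$I3$I1 = 0 \<Longrightarrow> g$I3$I2 = 0 \<Longrightarrow> g$I1$I1 \<noteq> 0 \<Longrightarrow> g \<in> S"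
proof -
  assume g: "g \<in> G" and z: "g$I3$I1 = 0" "g$I3$I2 = 0" and nz: "g$I1$I1 \<noteq> 0"
  let ?u = "U I2 I1 (-(g$I2$I1 * rinv (g$I1$I1)))"
  have "?u ** g \<in> S"
    using z nz by (intro P0_in_S G_mult G_U g) (simp_all add: U_mult_entry mult_rinv_cancel2)
  then show ?thesis using left_back[OF u21 g] by blast
qed

lemma RowP3_S: assumes u21: "\<And>t. U I2 I1 t \<in> S" shows "RowP G I3 \<subseteq> S"
proof
  fix g assume "g \<in> RowP G I3"
  then have g: "g \<in> G" and z: "g$I3$I1 = 0" "g$I3$I2 = 0" by (auto simp: RowP_def ix_all)
  show "g \<in> S"
  proof (cases "g$I1$I1 = 0")
    case False then show ?thesis using B1[OF u21 g z] by blast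
  next
    case True
    then have "g$I2$I1 \<noteq> 0" using not_G_zero_col[OF g, of I1] z by (auto simp: ix_all)
    then have "U I1 I2 1 ** g \<in> S"
      using z True by (intro B1[OF u21] G_mult G_U g) (simp_all add: U_mult_entry)
    then show ?thesis using left_back[OF U12S g] by blast
  qed
qed

end


lemma M3_eq_iff[simp]: "M3 a11 a12 a13 a21 a22 a23 a31 a32 a33 = M3 b11 b12 b13 b21 b22 b23 b31 b32 b33 \<longleftrightarrow>
  a11 = b11 \<and> a12 = b12 \<and> a13 = b13 \<and> a21 = b21 \<and> a22 = b22 \<and> a23 = b23 \<and> a31 = b31 \<and> a32 = b32 \<and> a33 = b33"
  by (simp add: mat3_eq_iff)

context psub begin

lemma conj_S: "y \<in> S \<Longrightarrow> x \<in> S \<Longrightarrow> y ** x ** matrix_inv y \<in> S"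
  by (intro Smul Sinv)

lemma from_conj: assumes "\<And>t. U k l (p * t * q) \<in> S" "p \<noteq> 0" "q \<noteq> 0" shows "U k l s \<in> S"
proof -
  have "p * (rinv p * s * rinv q) * q = s"
    using assms(2,3) by (simp add: mult.assoc mult_rinv_cancel rinv_l)
  then show ?thesis using assms(1)[of "rinv p * s * rinv q"] by simp
qed

lemma MonoA:
  assumes y: "y \<in> S" "y = M3 0 0 d 0 c 0 a 0 0" and nz: "a \<noteq> 0" "c \<noteq> 0" "d \<noteq> 0"
  shows "U I3 I2 s \<in> S" "U I2 I1 s \<in> S"
proof -
  have inv: "matrix_inv y = M3 0 0 (rinv a) 0 (rinv c) 0 (rinv d) 0 0"
    by (rule minv_eqI[OF SG[OF y(1)]]) (simp add: y(2) M3_mult mat1_M3 rinv_r nz)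
  have "y ** U I1 I2 t ** matrix_inv y = U I3 I2 (a * t * rinv c)" for t
    by (simp only: inv) (simp add: y(2) U_M3 M3_mult rinv_r nz)
  then have "U I3 I2 (a * t * rinv c) \<in> S" for t using conj_S[OF y(1) U12S] by metis
  then show "U I3 I2 s \<in> S" using from_conj[of I3 I2 a "rinv c"] nz rinv_nz by blast
  have "y ** U I2 I3 t ** matrix_inv y = U I2 I1 (c * t * rinv d)" for t
    by (simp only: inv) (simp add: y(2) U_M3 M3_mult rinv_r nz)
  then have "U I2 I1 (c * t * rinv d) \<in> S" for t using conj_S[OF y(1) U23S] by metis
  then show "U I2 I1 s \<in> S" using from_conj[of I2 I1 c "rinv d"] nz rinv_nz by blast
qed

lemma MonoB:
  assumes y: "y \<in> S" "y = M3 0 b 0 0 0 f a 0 0" and nz: "a \<noteq> 0" "b \<noteq> 0" "f \<noteq> 0"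
  shows "U I3 I1 s \<in> S"
proof -
  have inv: "matrix_inv y = M3 0 0 (rinv a) (rinv b) 0 0 0 (rinv f) 0"
    by (rule minv_eqI[OF SG[OF y(1)]]) (simp add: y(2) M3_mult mat1_M3 rinv_r nz)
  have "y ** U I1 I2 t ** matrix_inv y = U I3 I1 (a * t * rinv b)" for t
    by (simp only: inv) (simp add: y(2) U_M3 M3_mult rinv_r nz)
  then have "U I3 I1 (a * t * rinv b) \<in> S" for t using conj_S[OF y(1) U12S] by metis
  then show "U I3 I1 s \<in> S" using from_conj[of I3 I1 a "rinv b"] nz rinv_nz by blast
qed

lemma MonoC:
  assumes y: "y \<in> S" "y = M3 0 0 d c 0 0 0 a 0" and nz: "a \<noteq> 0" "c \<noteq> 0" "d \<noteq> 0"
  shows "U I3 I1 s \<in> S" "U I2 I1 s \<in> S"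
proof -
  have inv: "matrix_inv y = M3 0 (rinv c) 0 0 0 (rinv a) (rinv d) 0 0"
    by (rule minv_eqI[OF SG[OF y(1)]]) (simp add: y(2) M3_mult mat1_M3 rinv_r nz)
  have "y ** U I2 I3 t ** matrix_inv y = U I3 I1 (a * t * rinv d)" for t
    by (simp only: inv) (simp add: y(2) U_M3 M3_mult rinv_r nz)
  then have "U I3 I1 (a * t * rinv d) \<in> S" for t using conj_S[OF y(1) U23S] by metis
  then show "U I3 I1 s \<in> S" using from_conj[of I3 I1 a "rinv d"] nz rinv_nz by blast
  have "y ** U I1 I3 t ** matrix_inv y = U I2 I1 (c * t * rinv d)" for t
    by (simp only: inv) (simp add: y(2) U_M3 M3_mult rinv_r nz)
  then have "U I2 I1 (c * t * rinv d) \<in> S" for t using conj_S[OF y(1) U13S] by metis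
  then show "U I2 I1 s \<in> S" using from_conj[of I2 I1 c "rinv d"] nz rinv_nz by blast
qed

lemma MonoD:
  assumes y: "y \<in> S" "y = M3 b 0 0 0 0 f 0 a 0" and nz: "a \<noteq> 0" "b \<noteq> 0" "f \<noteq> 0"
  shows "U I3 I2 s \<in> S"
proof -
  have inv: "matrix_inv y = M3 (rinv b) 0 0 0 0 (rinv a) 0 (rinv f) 0"
    by (rule minv_eqI[OF SG[OF y(1)]]) (simp add: y(2) M3_mult mat1_M3 rinv_r nz)
  have "y ** U I2 I3 t ** matrix_inv y = U I3 I2 (a * t * rinv f)" for t
    by (simp only: inv) (simp add: y(2) U_M3 M3_mult rinv_r nz)
  then have "U I3 I2 (a * t * rinv f) \<in> S" for t using conj_S[OF y(1) U23S] by metis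
  then show "U I3 I2 s \<in> S" using from_conj[of I3 I2 a "rinv f"] nz rinv_nz by blast
qed

lemma MonoE:
  assumes y: "y \<in> S" "y = M3 0 b 0 a 0 0 0 0 f" and nz: "a \<noteq> 0" "b \<noteq> 0" "f \<noteq> 0"
  shows "U I2 I1 s \<in> S"
proof -
  have inv: "matrix_inv y = M3 0 (rinv a) 0 (rinv b) 0 0 0 0 (rinv f)"
    by (rule minv_eqI[OF SG[OF y(1)]]) (simp add: y(2) M3_mult mat1_M3 rinv_r nz)
  have "y ** U I1 I2 t ** matrix_inv y = U I2 I1 (a * t * rinv b)" for t
    by (simp only: inv) (simp add: y(2) U_M3 M3_mult rinv_r nz)
  then have "U I2 I1 (a * t * rinv b) \<in> S" for t using conj_S[OF y(1) U12S] by metis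
  then show "U I2 I1 s \<in> S" using from_conj[of I2 I1 a "rinv b"] nz rinv_nz by blast
qed

lemma zero_row_false: "y \<in> S \<Longrightarrow> y$r$I1 = 0 \<Longrightarrow> y$r$I2 = 0 \<Longrightarrow> y$r$I3 = 0 \<Longrightarrow> False"
  using not_G_zero_row[OF SG, of y r] by (auto simp: ix_all)
lemma zero_col_false: "y \<in> S \<Longrightarrow> y$I1$c = 0 \<Longrightarrow> y$I2$c = 0 \<Longrightarrow> y$I3$c = 0 \<Longrightarrow> False"
  using not_G_zero_col[OF SG, of y c] by (auto simp: ix_all)

lemma E31:
  assumes x: "x \<in> S" and a: "x$I3$I1 \<noteq> 0"
  shows "U I3 I2 s \<in> S \<and> U I2 I1 s \<in> S"
proof -
  define y1 where "y1 = x ** U I1 I2 (-(rinv (x$I3$I1) * x$I3$I2)) ** U I1 I3 (-(rinv (x$I3$I1) * x$I3$I3))"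
  have y1S: "y1 \<in> S" unfolding y1_def by (intro Smul x U12S U13S)
  have y1e: "y1$I3$I1 = x$I3$I1" "y1$I3$I2 = 0" "y1$I3$I3 = 0"
    by (simp_all add: y1_def mult_U_entry mult_rinv_cancel a)
  define y2 where "y2 = U I1 I3 (-(y1$I1$I1 * rinv (x$I3$I1))) ** (U I2 I3 (-(y1$I2$I1 * rinv (x$I3$I1))) ** y1)"
  have y2S: "y2 \<in> S" unfolding y2_def by (intro Smul y1S U13S U23S)
  have y2e: "y2$I1$I1 = 0" "y2$I2$I1 = 0" "y2$I3$I1 = x$I3$I1" "y2$I3$I2 = 0" "y2$I3$I3 = 0"
    by (simp_all add: y2_def U_mult_entry y1e mult_rinv_cancel2 a)
  show ?thesis
  proof (cases "y2$I2$I2 = 0")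
    case False
    define c where "c = y2$I2$I2"
    have c: "c \<noteq> 0" using False by (simp add: c_def)
    define y3 where "y3 = U I1 I2 (-(y2$I1$I2 * rinv c)) ** (y2 ** U I2 I3 (-(rinv c * y2$I2$I3)))"
    have y3S: "y3 \<in> S" unfolding y3_def by (intro Smul y2S U12S U23S)
    have y3e: "y3$I1$I1 = 0" "y3$I1$I2 = 0" "y3$I2$I1 = 0" "y3$I2$I2 = c" "y3$I2$I3 = 0"
       "y3$I3$I1 = x$I3$I1" "y3$I3$I2 = 0" "y3$I3$I3 = 0"
      by (simp_all add: y3_def U_mult_entry mult_U_entry y2e c_def[symmetric] mult_rinv_cancel2 mult_rinv_cancel c)
    have d: "y3$I1$I3 \<noteq> 0" using zero_row_false[OF y3S, of I1] y3e by auto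
    have "y3 = M3 0 0 (y3$I1$I3) 0 c 0 (x$I3$I1) 0 0" by (subst mat3_expand) (simp add: y3e)
    then show ?thesis using MonoA[OF y3S _ a c d] by blast
  next
    case True
    have b: "y2$I1$I2 \<noteq> 0" using zero_col_false[OF y2S, of I2] y2e True by auto
    have f: "y2$I2$I3 \<noteq> 0" using zero_row_false[OF y2S, of I2] y2e True by auto
    define y3 where "y3 = U I1 I2 (-(y2$I1$I3 * rinv (y2$I2$I3))) ** y2"
    have y3S: "y3 \<in> S" unfolding y3_def by (intro Smul y2S U12S)
    have "y3 = M3 0 (y2$I1$I2) 0 0 0 (y2$I2$I3) (x$I3$I1) 0 0"
      by (subst mat3_expand) (simp add: y3_def U_mult_entry y2e True mult_rinv_cancel2 f)
    then have "U I3 I1 t \<in> S" for t using MonoB[OF y3S _ a b f] by blast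
    then show ?thesis using U31_to_U32 U31_to_U21 by blast
  qed
qed

lemma E32:
  assumes x: "x \<in> S" and z: "x$I3$I1 = 0" and a: "x$I3$I2 \<noteq> 0"
  shows "U I3 I2 s \<in> S"
proof -
  define y1 where "y1 = x ** U I2 I3 (-(rinv (x$I3$I2) * x$I3$I3))"
  have y1S: "y1 \<in> S" unfolding y1_def by (intro Smul x U23S)
  have y1e: "y1$I3$I1 = 0" "y1$I3$I2 = x$I3$I2" "y1$I3$I3 = 0"
    by (simp_all add: y1_def mult_U_entry mult_rinv_cancel a z)
  define y2 where "y2 = U I1 I3 (-(y1$I1$I2 * rinv (x$I3$I2))) ** (U I2 I3 (-(y1$I2$I2 * rinv (x$I3$I2))) ** y1)"
  have y2S: "y2 \<in> S" unfolding y2_def by (intro Smul y1S U13S U23S)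
  have y2e: "y2$I1$I2 = 0" "y2$I2$I2 = 0" "y2$I3$I1 = 0" "y2$I3$I2 = x$I3$I2" "y2$I3$I3 = 0"
    by (simp_all add: y2_def U_mult_entry y1e mult_rinv_cancel2 a)
  show ?thesis
  proof (cases "y2$I2$I1 = 0")
    case False
    define c where "c = y2$I2$I1"
    have c: "c \<noteq> 0" using False by (simp add: c_def)
    define y3 where "y3 = U I1 I2 (-(y2$I1$I1 * rinv c)) ** (y2 ** U I1 I3 (-(rinv c * y2$I2$I3)))"
    have y3S: "y3 \<in> S" unfolding y3_def by (intro Smul y2S U12S U13S)
    have y3e: "y3$I1$I1 = 0" "y3$I1$I2 = 0" "y3$I2$I1 = c" "y3$I2$I2 = 0" "y3$I2$I3 = 0"
       "y3$I3$I1 = 0" "y3$I3$I2 = x$I3$I2" "y3$I3$I3 = 0"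
      by (simp_all add: y3_def U_mult_entry mult_U_entry y2e c_def[symmetric] mult_rinv_cancel2 mult_rinv_cancel c)
    have d: "y3$I1$I3 \<noteq> 0" using zero_row_false[OF y3S, of I1] y3e by auto
    have "y3 = M3 0 0 (y3$I1$I3) c 0 0 0 (x$I3$I2) 0" by (subst mat3_expand) (simp add: y3e)
    then have "U I3 I1 t \<in> S" for t using MonoC[OF y3S _ a c d] by blast
    then show ?thesis using U31_to_U32 by blast
  next
    case True
    have b: "y2$I1$I1 \<noteq> 0" using zero_col_false[OF y2S, of I1] y2e True by auto
    have f: "y2$I2$I3 \<noteq> 0" using zero_row_false[OF y2S, of I2] y2e True by auto
    define y3 where "y3 = y2 ** U I1 I3 (-(rinv (y2$I1$I1) * y2$I1$I3))"
    have y3S: "y3 \<in> S" unfolding y3_def by (intro Smul y2S U13S)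
    have "y3 = M3 (y2$I1$I1) 0 0 0 0 (y2$I2$I3) 0 (x$I3$I2) 0"
      by (subst mat3_expand) (simp add: y3_def mult_U_entry y2e True mult_rinv_cancel b)
    then show ?thesis using MonoD[OF y3S _ a b f] by blast
  qed
qed

lemma E21:
  assumes x: "x \<in> S" and z: "x$I3$I1 = 0" and a: "x$I2$I1 \<noteq> 0"
  shows "U I2 I1 s \<in> S"
proof -
  define y1 where "y1 = x ** U I1 I2 (-(rinv (x$I2$I1) * x$I2$I2)) ** U I1 I3 (-(rinv (x$I2$I1) * x$I2$I3))"
  have y1S: "y1 \<in> S" unfolding y1_def by (intro Smul x U12S U13S)
  have y1e: "y1$I2$I1 = x$I2$I1" "y1$I2$I2 = 0" "y1$I2$I3 = 0" "y1$I3$I1 = 0"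
    by (simp_all add: y1_def mult_U_entry mult_rinv_cancel a z)
  define y2 where "y2 = U I1 I2 (-(y1$I1$I1 * rinv (x$I2$I1))) ** y1"
  have y2S: "y2 \<in> S" unfolding y2_def by (intro Smul y1S U12S)
  have y2e: "y2$I1$I1 = 0" "y2$I2$I1 = x$I2$I1" "y2$I2$I2 = 0" "y2$I2$I3 = 0" "y2$I3$I1 = 0"
    by (simp_all add: y2_def U_mult_entry y1e mult_rinv_cancel2 a)
  show ?thesis
  proof (cases "y2$I3$I2 = 0")
    case False
    define c where "c = y2$I3$I2"
    have c: "c \<noteq> 0" using False by (simp add: c_def)
    define y3 where "y3 = U I1 I3 (-(y2$I1$I2 * rinv c)) ** (y2 ** U I2 I3 (-(rinv c * y2$I3$I3)))"
    have y3S: "y3 \<in> S" unfolding y3_def by (intro Smul y2S U13S U23S)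
    have y3e: "y3$I1$I1 = 0" "y3$I1$I2 = 0" "y3$I2$I1 = x$I2$I1" "y3$I2$I2 = 0" "y3$I2$I3 = 0"
       "y3$I3$I1 = 0" "y3$I3$I2 = c" "y3$I3$I3 = 0"
      by (simp_all add: y3_def U_mult_entry mult_U_entry y2e c_def[symmetric] mult_rinv_cancel2 mult_rinv_cancel c)
    have d: "y3$I1$I3 \<noteq> 0" using zero_row_false[OF y3S, of I1] y3e by auto
    have "y3 = M3 0 0 (y3$I1$I3) (x$I2$I1) 0 0 0 c 0" by (subst mat3_expand) (simp add: y3e)
    then show ?thesis using MonoC[OF y3S _ c a d] by blast
  next
    case True
    have b: "y2$I1$I2 \<noteq> 0" using zero_col_false[OF y2S, of I2] y2e True by auto
    have f: "y2$I3$I3 \<noteq> 0" using zero_row_false[OF y2S, of I3] y2e True by auto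
    define y3 where "y3 = U I1 I3 (-(y2$I1$I3 * rinv (y2$I3$I3))) ** y2"
    have y3S: "y3 \<in> S" unfolding y3_def by (intro Smul y2S U13S)
    have "y3 = M3 0 (y2$I1$I2) 0 (x$I2$I1) 0 0 0 0 (y2$I3$I3)"
      by (subst mat3_expand) (simp add: y3_def U_mult_entry y2e True mult_rinv_cancel2 f)
    then show ?thesis using MonoE[OF y3S _ a b f] by blast
  qed
qed

lemma not_RowP3: "x \<in> S \<Longrightarrow> x \<notin> RowP G I3 \<Longrightarrow> U I3 I2 s \<in> S"
proof -
  assume x: "x \<in> S" "x \<notin> RowP G I3"
  then have "x$I3$I1 \<noteq> 0 \<or> x$I3$I2 \<noteq> 0" using SG by (auto simp: RowP_def ix_all)
  then show ?thesis using E31[OF x(1)] E32[OF x(1)] by blast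
qed

lemma not_ColP1: "x \<in> S \<Longrightarrow> x \<notin> ColP G I1 \<Longrightarrow> U I2 I1 s \<in> S"
proof -
  assume x: "x \<in> S" "x \<notin> ColP G I1"
  then have "x$I3$I1 \<noteq> 0 \<or> x$I2$I1 \<noteq> 0" using SG by (auto simp: ColP_def ix_all)
  then show ?thesis using E31[OF x(1)] E21[OF x(1)] by blast
qed

lemma classify: "S \<subseteq> RowP G I3 \<or> S \<subseteq> ColP G I1 \<or> S = G"
proof (rule ccontr)
  assume h: "\<not> (S \<subseteq> RowP G I3 \<or> S \<subseteq> ColP G I1 \<or> S = G)"
  then obtain x x' where x: "x \<in> S" "x \<notin> RowP G I3" and x': "x' \<in> S" "x' \<notin> ColP G I1" by blast
  have "G \<subseteq> S" using A4[OF not_RowP3[OF x] not_ColP1[OF x']] by blast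
  then show False using h SG by blast
qed

end

context sgrp begin

lemma classify: "is_subgroup G S \<Longrightarrow> min_parabolic G \<subseteq> S \<Longrightarrow> S \<subseteq> RowP G I3 \<or> S \<subseteq> ColP G I1 \<or> S = G"
proof -
  assume "is_subgroup G S" "min_parabolic G \<subseteq> S"
  then interpret psub G S by unfold_locales
  show ?thesis by (rule classify)
qed

end


definition Sfix :: "('a::{ring_1,conjugation}) mat3 set \<Rightarrow> 'a mat3 set" where
  "Sfix G = {g \<in> G. sigma g = g}"

lemma Hgrp_Sfix: "Hgrp G = connected_component_set (Sfix G) (mat 1)"
  by (simp add: Hgrp_def Sfix_def)

lemma cont_M3:
  assumes "continuous_on S f11" "continuous_on S f12" "continuous_on S f13"
    "continuous_on S f21" "continuous_on S f22" "continuous_on S f23"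
    "continuous_on S f31" "continuous_on S f32" "continuous_on S f33"
  shows "continuous_on S (\<lambda>t. M3 (f11 t) (f12 t) (f13 t) (f21 t) (f22 t) (f23 t) (f31 t) (f32 t) (f33 t))"
  unfolding M3_def
  apply (rule continuous_on_vec_lambda)
  apply (rule continuous_on_vec_lambda)
  subgoal for i j by (cases i; cases j; simp add: assms)
  done

context sgrp begin

lemma cadd: "continuous_on S f \<Longrightarrow> continuous_on S g \<Longrightarrow> continuous_on S (\<lambda>x. f x + (g x :: 'a))"
  by (rule continuous_on_compose2[OF cont_add continuous_on_Pair, simplified]) auto

lemma clmult: "continuous_on S f \<Longrightarrow> continuous_on S (\<lambda>x. c * (f x :: 'a))"
  by (rule continuous_on_compose2[OF cont_lmult]) auto

lemma crmult: "continuous_on S f \<Longrightarrow> continuous_on S (\<lambda>x. (f x :: 'a) * c)"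
  by (rule continuous_on_compose2[OF cont_rmult]) auto

lemma cofr: "continuous_on S f \<Longrightarrow> continuous_on S (\<lambda>x. (ofr (f x) :: 'a))"
  by (rule continuous_on_compose2[OF cont_ofr]) auto

lemma cont_lmat: "continuous_on UNIV (\<lambda>x. (a :: 'a mat3) ** (x :: 'a mat3))"
proof -
  have e: "(\<lambda>x. (a :: 'a mat3) ** (x :: 'a mat3)) = (\<lambda>x. \<chi> i j. a$i$I1 * x$I1$j + a$i$I2 * x$I2$j + a$i$I3 * x$I3$j)"
    by (simp add: fun_eq_iff vec_eq_iff mm_entry)
  show ?thesis unfolding e
    by (intro continuous_on_vec_lambda cadd clmult continuous_on_component continuous_on_id)
qed

lemma Sfix_mult: "a \<in> Sfix G \<Longrightarrow> b \<in> Sfix G \<Longrightarrow> a ** b \<in> Sfix G"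
  by (simp add: Sfix_def G_mult sigma_mult)
lemma Sfix_minv: "a \<in> Sfix G \<Longrightarrow> matrix_inv a \<in> Sfix G"
  by (simp add: Sfix_def G_minv sigma_minv)
lemma Sfix_one: "mat 1 \<in> Sfix G"
  by (simp add: Sfix_def G_one)

lemma H_sub: "h \<in> Hgrp G \<Longrightarrow> h \<in> Sfix G"
  using connected_component_subset by (auto simp: Hgrp_Sfix)

lemma H_G: "h \<in> Hgrp G \<Longrightarrow> h \<in> G"
  using H_sub by (simp add: Sfix_def)

lemma H_one: "mat 1 \<in> Hgrp G"
  by (simp add: Hgrp_Sfix Sfix_one connected_component_refl)

lemma H_mult: assumes a: "a \<in> Hgrp G" and b: "b \<in> Hgrp G" shows "a ** b \<in> Hgrp G"
proof -
  let ?C = "connected_component_set (Sfix G) (mat 1)"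
  let ?T = "(\<lambda>x. a ** x) ` ?C"
  have aS: "a \<in> Sfix G" using H_sub a by blast
  have c1: "connected ?T" by (rule connected_continuous_image[OF continuous_on_subset[OF cont_lmat]]) auto
  have c2: "a \<in> ?T" using H_one by (auto simp: Hgrp_Sfix intro!: image_eqI[of _ _ "mat 1"])
  have c3: "?T \<subseteq> Sfix G" using connected_component_subset Sfix_mult[OF aS] by blast
  have "?T \<subseteq> connected_component_set (Sfix G) a" by (rule connected_component_maximal[OF c2 c1 c3])
  also have "\<dots> = ?C" using a by (simp add: Hgrp_Sfix connected_component_eq)
  finally show ?thesis using b by (auto simp: Hgrp_Sfix)
qed

lemma H_minv: assumes a: "a \<in> Hgrp G" shows "matrix_inv a \<in> Hgrp G"
proof -
  let ?C = "connected_component_set (Sfix G) (mat 1)"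
  let ?T = "(\<lambda>x. matrix_inv a ** x) ` ?C"
  have aS: "a \<in> Sfix G" using H_sub a by blast
  have aG: "a \<in> G" using aS by (simp add: Sfix_def)
  have c1: "connected ?T" by (rule connected_continuous_image[OF continuous_on_subset[OF cont_lmat]]) auto
  have c2: "mat 1 \<in> ?T" using a inv_l[OF aG] by (auto simp: Hgrp_Sfix intro!: image_eqI[of _ _ a])
  have c3: "?T \<subseteq> Sfix G" using connected_component_subset Sfix_mult[OF Sfix_minv[OF aS]] by blast
  have "?T \<subseteq> ?C" by (rule connected_component_maximal[OF c2 c1 c3])
  moreover have "matrix_inv a \<in> ?T" using H_one by (auto simp: Hgrp_Sfix intro!: image_eqI[of _ _ "mat 1"])
  ultimately show ?thesis by (auto simp: Hgrp_Sfix)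
qed

lemma path_H:
  assumes c: "continuous_on {0..1::real} p" and S: "\<And>t. t \<in> {0..1} \<Longrightarrow> p t \<in> Sfix G"
    and p0: "p 0 = mat 1"
  shows "p 1 \<in> Hgrp G"
proof -
  have "p ` {0..1} \<subseteq> connected_component_set (Sfix G) (mat 1)"
    by (rule connected_component_maximal) (use c S p0 in \<open>auto intro!: connected_continuous_image image_eqI[of _ _ 0]\<close>)
  moreover have "p 1 \<in> p ` {0..1}" by auto
  ultimately show ?thesis unfolding Hgrp_Sfix by blast
qed

lemma Sfix_form: "h \<in> Sfix G \<Longrightarrow> ctrans h ** Jmat ** h = Jmat"
proof -
  assume h: "h \<in> Sfix G"
  then have hG: "h \<in> G" and s: "Jmat ** ctrans (matrix_inv h) ** Jmat = h"
    by (auto simp: Sfix_def sigma_def theta_def)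
  have "ctrans h ** Jmat ** h = ctrans h ** Jmat ** (Jmat ** ctrans (matrix_inv h) ** Jmat)"
    by (simp add: s)
  also have "\<dots> = ctrans (matrix_inv h ** h) ** Jmat"
    by (simp add: matrix_mul_assoc ctrans_mult)
  finally show ?thesis by (simp add: inv_l hG)
qed

lemma H_form: "h \<in> Hgrp G \<Longrightarrow> ctrans h ** Jmat ** h = Jmat"
  using H_sub Sfix_form by blast

end


definition rotm :: "'a::qfield \<Rightarrow> 'a mat3" where
  "rotm g = M3 1 0 0 0 (ofr (sqrt (1 - nsq g))) (- conjf g) 0 g (ofr (sqrt (1 - nsq g)))"
definition boostm :: "'a::qfield \<Rightarrow> 'a mat3" where
  "boostm b = M3 (ofr (sqrt (1 + nsq b))) 0 (conjf b) 0 1 0 b 0 (ofr (sqrt (1 + nsq b)))"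

context qfield begin
lemma sl2_alg:
  assumes "g \<noteq> 0"
  shows "(1 + ofr (r-1) * rinv g * g) * (rinv g * ofr (r-1)) + ofr (r-1) * rinv g = rinv g * ofr (r*r - 1)"
proof -
  have 1: "ofr (r-1) * rinv g * g = ofr (r-1)" by (simp add: mult.assoc rinv_l assms)
  have 2: "1 + ofr (r-1) = ofr r" by (simp add: ofr_diff algebra_simps)
  have 3: "ofr r * (rinv g * ofr (r-1)) = rinv g * ofr (r*(r-1))" by (metis mult.assoc ofr_comm ofr_mult)
  have 4: "ofr (r-1) * rinv g = rinv g * ofr (r-1)" by (rule ofr_comm)
  have 5: "rinv g * ofr (r*(r-1)) + rinv g * ofr (r-1) = rinv g * ofr (r*r - 1)"
    by (simp add: distrib_left[symmetric] ofr_add[symmetric] algebra_simps)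
  show ?thesis unfolding 1 unfolding 2 unfolding 3 unfolding 4 by (rule 5)
qed
end

context sgrp begin

lemma rot0: "rotm (0::'a) = mat 1"
  by (simp add: rotm_def mat1_M3)

lemma boost0: "boostm (0::'a) = mat 1"
  by (simp add: boostm_def mat1_M3)

lemma rot_G: assumes n: "nsq (g::'a) \<le> 1" shows "rotm g \<in> G"
proof (cases "g = 0")
  case True then show ?thesis by (simp add: rot0 G_one)
next
  case False
  define r where "r = sqrt (1 - nsq g)"
  have rr: "r * r = 1 - nsq g" using n by (simp add: r_def)
  define x where "x = ofr (r-1) * rinv g"
  define z where "z = rinv g * ofr (r-1)"
  have prod: "U I2 I3 x ** U I3 I2 g ** U I2 I3 z = M3 1 0 0 0 (1 + x*g) ((1 + x*g)*z + x) 0 g (g*z + 1)"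
    by (simp add: U_M3 M3_mult)
  have e1: "1 + x * g = ofr r" unfolding x_def by (simp add: mult.assoc rinv_l False ofr_diff)
  have e2: "g * z + 1 = ofr r" unfolding z_def by (simp add: mult_rinv_cancel False ofr_diff)
  have e3: "ofr r * z + x = - conjf g"
  proof -
    have "ofr r * z + x = rinv g * ofr (r*r - 1)" unfolding e1[symmetric] unfolding x_def z_def by (rule sl2_alg[OF False])
    also have "\<dots> = - (rinv g * (g * conjf g))" by (simp add: rr mult_conj_self ofr_neg)
    also have "\<dots> = - conjf g" by (simp add: rinv_mult_cancel False)
    finally show ?thesis .
  qed
  have R: "rotm g = M3 1 0 0 0 (ofr r) (- conjf g) 0 g (ofr r)" by (simp add: rotm_def r_def)
  have "rotm g = U I2 I3 x ** U I3 I2 g ** U I2 I3 z"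
    by (simp only: prod e1 e2 e3 R)
  also have "\<dots> \<in> G" by (intro G_mult G_U) simp_all
  finally show ?thesis .
qed

lemma boost_G: "boostm (g::'a) \<in> G"
proof (cases "g = 0")
  case True then show ?thesis by (simp add: boost0 G_one)
next
  case False
  define r where "r = sqrt (1 + nsq g)"
  have rr: "r * r = 1 + nsq g" using nsq_nonneg[of g] by (simp add: r_def)
  define x where "x = ofr (r-1) * rinv g"
  define z where "z = rinv g * ofr (r-1)"
  have prod: "U I1 I3 x ** U I3 I1 g ** U I1 I3 z = M3 (1 + x*g) 0 ((1 + x*g)*z + x) 0 1 0 g 0 (g*z + 1)"
    by (simp add: U_M3 M3_mult)
  have e1: "1 + x * g = ofr r" unfolding x_def by (simp add: mult.assoc rinv_l False ofr_diff)
  have e2: "g * z + 1 = ofr r" unfolding z_def by (simp add: mult_rinv_cancel False ofr_diff)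
  have e3: "ofr r * z + x = conjf g"
  proof -
    have "ofr r * z + x = rinv g * ofr (r*r - 1)" unfolding e1[symmetric] unfolding x_def z_def by (rule sl2_alg[OF False])
    also have "\<dots> = rinv g * (g * conjf g)" by (simp add: rr mult_conj_self)
    also have "\<dots> = conjf g" by (simp add: rinv_mult_cancel False)
    finally show ?thesis .
  qed
  have B: "boostm g = M3 (ofr r) 0 (conjf g) 0 1 0 g 0 (ofr r)" by (simp add: boostm_def r_def)
  have "boostm g = U I1 I3 x ** U I3 I1 g ** U I1 I3 z"
    by (simp only: prod e1 e2 e3 B)
  also have "\<dots> \<in> G" by (intro G_mult G_U) simp_all
  finally show ?thesis .
qed

lemma rot_fix: assumes n: "nsq (g::'a) \<le> 1" shows "rotm g \<in> Sfix G"
proof -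
  define c where "c = sqrt (1 - nsq g)"
  have cc: "ofr c * ofr c = (ofr (1 - nsq g) :: 'a)" using n by (simp add: c_def flip: ofr_mult)
  have s1: "ofr (1 - nsq g) + ofr (nsq g) = (1 :: 'a)" by (simp flip: ofr_add)
  have s2: "ofr (nsq g) + ofr (1 - nsq g) = (1 :: 'a)" by (simp flip: ofr_add)
  have k1: "conjf g * ofr c = ofr c * conjf g" "g * ofr c = ofr c * g" by (simp_all add: ofr_comm)
  have R: "rotm g = M3 1 0 0 0 (ofr c) (- conjf g) 0 g (ofr c)" by (simp add: rotm_def c_def)
  have inv: "matrix_inv (rotm g) = ctrans (rotm g)"
    by (rule minv_eqI[OF rot_G[OF n]])
       (simp add: R ctrans_M3 M3_mult mat1_M3 conj_ofr conj_neg conj_conj cc k1 conj_mult_self mult_conj_self s1 s2)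
  have "sigma (rotm g) = rotm g"
    by (simp add: sigma_def theta_def inv) (simp add: R J_M3 M3_mult)
  then show ?thesis using rot_G[OF n] by (simp add: Sfix_def)
qed

lemma boost_fix: "boostm (g::'a) \<in> Sfix G"
proof -
  define c where "c = sqrt (1 + nsq g)"
  have cc: "ofr c * ofr c = (ofr (1 + nsq g) :: 'a)" using nsq_nonneg[of g] by (simp add: c_def flip: ofr_mult)
  have s1: "ofr (1 + nsq g) - ofr (nsq g) = (1 :: 'a)" by (simp add: ofr_add)
  have s2: "- ofr (nsq g) + ofr (1 + nsq g) = (1 :: 'a)" by (simp add: ofr_add)
  have k1: "conjf g * ofr c = ofr c * conjf g" "g * ofr c = ofr c * g" by (simp_all add: ofr_comm)
  have B: "boostm g = M3 (ofr c) 0 (conjf g) 0 1 0 g 0 (ofr c)" by (simp add: boostm_def c_def)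
  have inv: "matrix_inv (boostm g) = Jmat ** boostm g ** Jmat"
    by (rule minv_eqI[OF boost_G])
       (simp add: B J_M3 M3_mult mat1_M3 cc k1 conj_mult_self mult_conj_self s1 s2)
  have ct: "ctrans (boostm g) = boostm g" by (simp add: B ctrans_M3 conj_ofr conj_conj)
  have "sigma (boostm g) = boostm g"
    by (simp add: sigma_def theta_def inv ctrans_mult ct) (simp add: B J_M3 M3_mult)
  then show ?thesis using boost_G by (simp add: Sfix_def)
qed

lemma rot_H: assumes n: "nsq (g::'a) \<le> 1" shows "rotm g \<in> Hgrp G"
proof -
  define p where "p t = rotm (ofr t * g)" for t :: real
  have pe: "p t = M3 1 0 0 0 (ofr (sqrt (1 - t*t*nsq g))) (ofr t * (- conjf g)) 0 (ofr t * g) (ofr (sqrt (1 - t*t*nsq g)))" for t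
    by (simp add: p_def rotm_def nsq_mult conj_ofr_mult)
  have "p 1 \<in> Hgrp G"
  proof (rule path_H)
    show "continuous_on {0..1} p" unfolding pe
      by (intro cont_M3 continuous_on_const cofr crmult continuous_intros)
    show "p t \<in> Sfix G" if "t \<in> {0..1}" for t
    proof -
      have "t * t * nsq g \<le> 1 * 1 * 1" using that n nsq_nonneg[of g]
        by (intro mult_mono) (auto intro: mult_le_one)
      then show ?thesis unfolding p_def by (intro rot_fix) (simp add: nsq_mult)
    qed
    show "p 0 = mat 1" by (simp add: p_def rot0)
  qed
  then show ?thesis by (simp add: p_def)
qed

lemma boost_H: "boostm (g::'a) \<in> Hgrp G"
proof -
  define p where "p t = boostm (ofr t * g)" for t :: real
  have pe: "p t = M3 (ofr (sqrt (1 + t*t*nsq g))) 0 (ofr t * conjf g) 0 1 0 (ofr t * g) 0 (ofr (sqrt (1 + t*t*nsq g)))" for t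
    by (simp add: p_def boostm_def nsq_mult conj_ofr_mult)
  have "p 1 \<in> Hgrp G"
  proof (rule path_H)
    show "continuous_on {0..1} p" unfolding pe
      by (intro cont_M3 continuous_on_const cofr crmult continuous_intros)
    show "p t \<in> Sfix G" for t unfolding p_def by (rule boost_fix)
    show "p 0 = mat 1" by (simp add: p_def boost0)
  qed
  then show ?thesis by (simp add: p_def)
qed

end


context sgrp begin

lemma rotboost_col3:
  "(rotm g ** boostm b)$I1$I3 = conjf b"
  "(rotm g ** boostm b)$I2$I3 = - conjf g * ofr (sqrt (1 + nsq b))"
  "(rotm g ** boostm b)$I3$I3 = ofr (sqrt (1 - nsq g)) * ofr (sqrt (1 + nsq b))"
  by (simp_all add: rotm_def boostm_def mm_entry)

lemma rotboost_col1:
  "(rotm g ** boostm b)$I1$I1 = ofr (sqrt (1 + nsq b))"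
  "(rotm g ** boostm b)$I2$I1 = - conjf g * b"
  "(rotm g ** boostm b)$I3$I1 = ofr (sqrt (1 - nsq g)) * b"
  by (simp_all add: rotm_def boostm_def mm_entry)

lemma TN:
  fixes v1 v2 v3 :: 'a
  assumes e: "nsq v1 - nsq v2 - nsq v3 = -1"
  shows "\<exists>h\<in>Hgrp G. \<exists>l. l \<noteq> 0 \<and> h$I1$I3 = v1 * l \<and> h$I2$I3 = v2 * l \<and> h$I3$I3 = v3 * l"
proof -
  define n1 n2 n3 where "n1 = nsq v1" "n2 = nsq v2" "n3 = nsq v3"
  have n: "n1 \<ge> 0" "n2 \<ge> 0" "n3 \<ge> 0" by (simp_all add: n1_n2_n3_def nsq_nonneg)
  have e': "n3 = 1 + n1 - n2" using e by (simp add: n1_n2_n3_def)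
  define mu where "mu = (if v3 = 0 then 1 else conjf v3 * ofr (1 / sqrt n3))"
  have mu_nsq: "nsq mu = 1"
  proof (cases "v3 = 0")
    case False
    then have "n3 > 0" by (simp add: n1_n2_n3_def nsq_pos)
    then show ?thesis using False by (simp add: mu_def nsq_mult n1_n2_n3_def[symmetric])
  qed (simp add: mu_def)
  have mu_nz: "mu \<noteq> 0" using mu_nsq by auto
  have v3mu: "v3 * mu = ofr (sqrt n3)"
  proof (cases "v3 = 0")
    case False
    then have n3: "n3 > 0" by (simp add: n1_n2_n3_def nsq_pos)
    have "v3 * mu = ofr n3 * ofr (1 / sqrt n3)"
      using False by (simp add: mu_def mult.assoc[symmetric] mult_conj_self n1_n2_n3_def)
    also have "\<dots> = ofr (sqrt n3)" using n3
      by (simp flip: ofr_mult) (metis real_div_sqrt less_imp_le times_divide_eq_right mult_1_right)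
    finally show ?thesis .
  qed (simp add: n1_n2_n3_def)
  define b where "b = conjf (v1 * mu)"
  have nb: "nsq b = n1" by (simp add: b_def nsq_mult mu_nsq n1_n2_n3_def)
  define r where "r = sqrt (1 + n1)"
  have r: "r > 0" "r * r = 1 + n1" using n by (simp_all add: r_def)
  define g where "g = - (conjf (v2 * mu)) * ofr (1 / r)"
  have ng: "nsq g = n2 / (1 + n1)"
    using r by (simp add: g_def nsq_mult mu_nsq n1_n2_n3_def[symmetric] field_simps)
  have ng1: "nsq g \<le> 1"
  proof -
    have "n2 \<le> 1 + n1" "1 + n1 > 0" using n e' by linarith+
    then show ?thesis unfolding ng by (simp add: divide_le_eq)
  qed
  define h where "h = rotm g ** boostm b"
  have hH: "h \<in> Hgrp G" unfolding h_def by (intro H_mult rot_H boost_H ng1)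
  have h1: "h$I1$I3 = v1 * mu" by (simp add: h_def rotboost_col3 b_def conj_conj)
  have h2: "h$I2$I3 = v2 * mu"
  proof -
    have "h$I2$I3 = ofr (1 / r) * (v2 * mu) * ofr r"
      by (simp add: h_def rotboost_col3 nb r_def[symmetric] g_def conj_mult conj_neg conj_conj conj_ofr ofr_comm)
    also have "\<dots> = ofr (1 / r) * (ofr r * (v2 * mu))"
      by (metis mult.assoc ofr_comm)
    also have "\<dots> = ofr (1 / r * r) * (v2 * mu)" by (simp only: ofr_mult mult.assoc)
    also have "\<dots> = v2 * mu" using r by simp
    finally show ?thesis .
  qed
  have h3: "h$I3$I3 = v3 * mu"
  proof -
    have "1 - n2 / (1 + n1) = n3 / (1 + n1)" using e' n by (simp add: field_simps)
    then have "sqrt (1 - nsq g) * r = sqrt n3" using r n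
      by (simp add: ng r_def real_sqrt_divide)
    then show ?thesis
      by (simp add: h_def rotboost_col3 nb r_def[symmetric] v3mu flip: ofr_mult)
  qed
  show ?thesis using hH mu_nz h1 h2 h3 by blast
qed

end


context sgrp begin

lemma TP:
  fixes v1 v2 v3 :: 'a
  assumes e: "nsq v1 - nsq v2 - nsq v3 = 1"
  shows "\<exists>h\<in>Hgrp G. \<exists>l. l \<noteq> 0 \<and> h$I1$I1 = v1 * l \<and> h$I2$I1 = v2 * l \<and> h$I3$I1 = v3 * l"
proof -
  define n1 n2 n3 where "n1 = nsq v1" "n2 = nsq v2" "n3 = nsq v3"
  have n: "n1 \<ge> 0" "n2 \<ge> 0" "n3 \<ge> 0" by (simp_all add: n1_n2_n3_def nsq_nonneg)
  have e': "n1 = 1 + n2 + n3" using e by (simp add: n1_n2_n3_def)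
  have n1p: "n1 > 0" using e' n by linarith
  have v1: "v1 \<noteq> 0" using n1p by (auto simp: n1_n2_n3_def)
  define mu where "mu = conjf v1 * ofr (1 / sqrt n1)"
  have mu_nsq: "nsq mu = 1"
    using n1p by (simp add: mu_def nsq_mult n1_n2_n3_def[symmetric])
  have mu_nz: "mu \<noteq> 0" using mu_nsq by auto
  have v1mu: "v1 * mu = ofr (sqrt n1)"
  proof -
    have "v1 * mu = ofr n1 * ofr (1 / sqrt n1)"
      by (simp add: mu_def mult.assoc[symmetric] mult_conj_self n1_n2_n3_def)
    also have "\<dots> = ofr (sqrt n1)" using n1p
      by (simp flip: ofr_mult) (metis real_div_sqrt less_imp_le times_divide_eq_right mult_1_right)
    finally show ?thesis .
  qed
  define m where "m = sqrt (n2 + n3)"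
  have m: "m \<ge> 0" "m * m = n2 + n3" using n by (simp_all add: m_def)
  define b where "b = (if v3 = 0 then ofr m else v3 * mu * ofr (m / sqrt n3))"
  have nb: "nsq b = n2 + n3"
  proof (cases "v3 = 0")
    case False
    then have n3: "n3 > 0" by (simp add: n1_n2_n3_def nsq_pos)
    have "n3 * (m / sqrt n3) * (m / sqrt n3) = m * m" using n3 by (simp add: field_simps)
    then show ?thesis using False m
      by (simp add: b_def nsq_mult mu_nsq n1_n2_n3_def[symmetric] mult.assoc)
  qed (simp add: b_def m n1_n2_n3_def)
  define g where "g = - (conjf (v2 * mu * rinv b))"
  have bz: "b = 0 \<Longrightarrow> v2 = 0 \<and> v3 = 0"
  proof -
    assume "b = 0"
    then have "n2 + n3 = 0" using nb by simp
    then have "n2 = 0" "n3 = 0" using n by linarith+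
    then show ?thesis by (simp add: n1_n2_n3_def)
  qed
  have ng: "b \<noteq> 0 \<Longrightarrow> nsq g = n2 / (n2 + n3)"
    by (simp add: g_def nsq_mult mu_nsq nsq_rinv nb n1_n2_n3_def[symmetric])
  have ng1: "nsq g \<le> 1"
  proof (cases "b = 0")
    case True then show ?thesis using bz by (simp add: g_def)
  next
    case False
    then have "n2 + n3 > 0" using nb nsq_pos by force
    then show ?thesis using ng[OF False] n by (simp add: divide_le_eq)
  qed
  define h where "h = rotm g ** boostm b"
  have hH: "h \<in> Hgrp G" unfolding h_def by (intro H_mult rot_H boost_H ng1)
  have h1: "h$I1$I1 = v1 * mu" by (simp add: h_def rotboost_col1 nb v1mu e')
  have h2: "h$I2$I1 = v2 * mu"
  proof (cases "b = 0")
    case True then show ?thesis using bz by (simp add: h_def rotboost_col1)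
  next
    case False
    then show ?thesis by (simp add: h_def rotboost_col1 g_def conj_neg conj_conj mult_rinv_cancel2)
  qed
  have h3: "h$I3$I1 = v3 * mu"
  proof (cases "b = 0")
    case True then show ?thesis using bz by (simp add: h_def rotboost_col1)
  next
    case False
    then have s: "n2 + n3 > 0" using nb nsq_pos by force
    have "1 - nsq g = n3 / (n2 + n3)" using ng[OF False] s by (simp add: field_simps)
    then have c: "sqrt (1 - nsq g) = sqrt n3 / m" by (simp add: m_def real_sqrt_divide)
    show ?thesis
    proof (cases "v3 = 0")
      case True
      then show ?thesis using c by (simp add: h_def rotboost_col1 n1_n2_n3_def)
    next
      case v3: False
      then have n3: "n3 > 0" by (simp add: n1_n2_n3_def nsq_pos)
      have mp: "m > 0" using s by (simp add: m_def)
      have "h$I3$I1 = ofr (sqrt n3 / m) * (v3 * mu * ofr (m / sqrt n3))"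
        using v3 by (simp add: h_def rotboost_col1 c b_def)
      also have "\<dots> = ofr (sqrt n3 / m) * (ofr (m / sqrt n3) * (v3 * mu))"
        by (metis mult.assoc ofr_comm)
      also have "\<dots> = ofr (sqrt n3 / m * (m / sqrt n3)) * (v3 * mu)" by (simp only: ofr_mult mult.assoc)
      also have "\<dots> = v3 * mu" using mp n3 by simp
      finally show ?thesis .
    qed
  qed
  show ?thesis using hH mu_nz h1 h2 h3 by blast
qed

lemma rot_m1: "rotm (-1 :: 'a) = M3 1 0 0 0 0 1 0 (-1) 0"
  by (simp add: rotm_def conj_neg)

lemma TN2:
  fixes v1 v2 v3 :: 'a
  assumes e: "nsq v1 - nsq v2 - nsq v3 = -1"
  shows "\<exists>h\<in>Hgrp G. \<exists>l. l \<noteq> 0 \<and> h$I1$I2 = v1 * l \<and> h$I2$I2 = v2 * l \<and> h$I3$I2 = v3 * l"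
proof -
  obtain h l where h: "h \<in> Hgrp G" "l \<noteq> 0" "h$I1$I3 = v1 * l" "h$I2$I3 = v2 * l" "h$I3$I3 = v3 * l"
    using TN[OF e] by blast
  have rH: "rotm (-1 :: 'a) \<in> Hgrp G" by (rule rot_H) simp
  have "h ** rotm (-1) \<in> Hgrp G" by (rule H_mult[OF h(1) rH])
  moreover have "(h ** rotm (-1))$i$I2 = - (h$i$I3)" for i by (simp add: rot_m1 mm_entry)
  ultimately show ?thesis using h(2-) by (intro bexI[of _ "h ** rotm (-1)"] exI[of _ "- l"]) auto
qed

end


context sgrp begin

lemma form_entry: "(ctrans q ** Jmat ** (q :: 'a mat3))$i$j =
   conjf (q$I1$i) * q$I1$j - conjf (q$I2$i) * q$I2$j - conjf (q$I3$i) * q$I3$j"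
  by (simp add: mm_entry ctrans_entry Jmat_entry)

lemma form_diag: "(ctrans q ** Jmat ** (q :: 'a mat3))$i$i = ofr (nsq (q$I1$i) - nsq (q$I2$i) - nsq (q$I3$i))"
  by (simp add: form_entry conj_mult_self ofr_diff)

lemma H11: "h \<in> Hgrp G \<Longrightarrow> nsq (h$I1$I1) - nsq (h$I2$I1) - nsq (h$I3$I1) = 1"
  using arg_cong[OF H_form, of h "\<lambda>m. m$I1$I1"] by (simp add: form_diag Jmat_entry)

lemma H11_nz: "h \<in> Hgrp G \<Longrightarrow> h$I1$I1 \<noteq> 0"
proof
  assume h: "h \<in> Hgrp G" and z: "h$I1$I1 = 0"
  have "nsq (h$I2$I1) \<ge> 0" "nsq (h$I3$I1) \<ge> 0" by (simp_all add: nsq_nonneg)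
  then show False using H11[OF h] z by simp
qed

lemma form_sigma: "g \<in> G \<Longrightarrow> (ctrans g ** Jmat ** g) ** (matrix_inv g ** sigma g) = Jmat"
proof -
  assume g: "g \<in> G"
  have "(ctrans g ** Jmat ** g) ** (matrix_inv g ** sigma g) = ctrans g ** Jmat ** (g ** matrix_inv g) ** sigma g"
    by (simp add: matrix_mul_assoc)
  also have "\<dots> = ctrans g ** (Jmat ** Jmat) ** ctrans (matrix_inv g) ** Jmat"
    by (simp add: inv_r g sigma_def theta_def matrix_mul_assoc)
  also have "\<dots> = ctrans (matrix_inv g ** g) ** Jmat" by (simp add: ctrans_mult)
  finally show ?thesis by (simp add: inv_l g)
qed

lemma transfer:
  assumes h: "h \<in> Hgrp G" and g: "g \<in> G" and l: "l \<noteq> 0" and hc: "\<And>i. h$i$c = g$i$d * l"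
  shows "(matrix_inv h ** g)$i$d = (if i = c then rinv l else 0)"
    and "ctrans (matrix_inv h ** g) ** Jmat ** (matrix_inv h ** g) = ctrans g ** Jmat ** g"
    and "g = h ** (matrix_inv h ** g)" and "matrix_inv h ** g \<in> G"
proof -
  have hG: "h \<in> G" by (rule H_G[OF h])
  have gc: "g$m$d = h$m$c * rinv l" for m using hc[of m] l by (simp add: mult_rinv_cancel3)
  have "(matrix_inv h ** g)$i$d = (matrix_inv h ** h)$i$c * rinv l"
    by (simp add: mm_entry gc distrib_right mult.assoc)
  then show "(matrix_inv h ** g)$i$d = (if i = c then rinv l else 0)"
    by (simp add: inv_l hG mat1_entry)
  have hi: "matrix_inv h \<in> Hgrp G" by (rule H_minv[OF h])
  have "ctrans (matrix_inv h ** g) ** Jmat ** (matrix_inv h ** g) = ctrans g ** (ctrans (matrix_inv h) ** Jmat ** matrix_inv h) ** g"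
    by (simp add: ctrans_mult matrix_mul_assoc)
  also have "\<dots> = ctrans g ** Jmat ** g" by (simp only: H_form[OF hi])
  finally show "ctrans (matrix_inv h ** g) ** Jmat ** (matrix_inv h ** g) = ctrans g ** Jmat ** g" .
  show "g = h ** (matrix_inv h ** g)" by (simp add: matrix_mul_assoc inv_r hG)
  show "matrix_inv h ** g \<in> G" by (simp add: G_mult G_minv hG g)
qed

lemma scale_vec:
  fixes v1 v2 v3 :: 'a
  assumes "nsq v1 - nsq v2 - nsq v3 = r" "r \<noteq> 0"
  shows "nsq (v1 * ofr (1 / sqrt \<bar>r\<bar>)) - nsq (v2 * ofr (1 / sqrt \<bar>r\<bar>)) - nsq (v3 * ofr (1 / sqrt \<bar>r\<bar>)) = sgn r"
proof -
  have "nsq (v1 * ofr (1 / sqrt \<bar>r\<bar>)) - nsq (v2 * ofr (1 / sqrt \<bar>r\<bar>)) - nsq (v3 * ofr (1 / sqrt \<bar>r\<bar>))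
      = (nsq v1 - nsq v2 - nsq v3) / \<bar>r\<bar>"
    using assms(2) by (simp add: nsq_mult field_simps)
  also have "\<dots> = sgn r" using assms by (simp add: sgn_if)
  finally show ?thesis .
qed

lemma BR1:
  assumes g: "g \<in> G" and Q: "Q = conjset g (RowP G I3)" and sQ: "sigma ` Q = conjset g (ColP G I3)"
  shows "\<exists>h\<in>Hgrp G. Q = conjset h (RowP G I3) \<or> Q = conjset h (RowP G I1)"
proof -
  have s1: "sigma ` Q = conjset (sigma g) (ColP G I3)"
    using Q sigma_conjset[OF RowP_sub g] sigma_RowP by simp
  define k where "k = matrix_inv g ** sigma g"
  have kG: "k \<in> G" by (simp add: k_def G_mult G_minv sigma_G g)
  have "conjset k (ColP G I3) = conjset (matrix_inv g) (conjset g (ColP G I3))"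
    using s1 sQ by (simp add: k_def conjset_mult G_minv sigma_G g)
  also have "\<dots> = ColP G I3" by (rule conjset_inv[OF g])
  finally have kC: "k \<in> ColP G I3" by (rule norm_ColP[OF kG])
  define M where "M = ctrans g ** Jmat ** g"
  have Mk: "M ** k = Jmat" unfolding M_def k_def by (rule form_sigma[OF g])
  have M: "M = Jmat ** matrix_inv k"
  proof -
    have "M = M ** (k ** matrix_inv k)" by (simp add: inv_r kG)
    also have "\<dots> = Jmat ** matrix_inv k" by (simp add: matrix_mul_assoc Mk)
    finally show ?thesis .
  qed
  have kiC: "matrix_inv k \<in> ColP G I3" by (rule ColP_minv[OF kC])
  then have ki: "matrix_inv k$I1$I3 = 0" "matrix_inv k$I2$I3 = 0" by (auto simp: ColP_def ix_all)
  have ki3: "matrix_inv k$I3$I3 \<noteq> 0"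
    using not_G_zero_col[OF ColP_sub[THEN subsetD, OF kiC], of I3] ki by (auto simp: ix_all)
  have M13: "M$I1$I3 = 0" "M$I2$I3 = 0" and M33: "M$I3$I3 \<noteq> 0"
    using ki ki3 by (simp_all add: M mm_entry Jmat_entry)
  define r where "r = nsq (g$I1$I3) - nsq (g$I2$I3) - nsq (g$I3$I3)"
  have Mr: "M$I3$I3 = ofr r" by (simp add: M_def form_diag r_def)
  have r0: "r \<noteq> 0" using M33 Mr by auto
  define sc where "sc = (ofr (1 / sqrt \<bar>r\<bar>) :: 'a)"
  have sc0: "sc \<noteq> 0" using r0 by (simp add: sc_def)
  have sv: "nsq (g$I1$I3 * sc) - nsq (g$I2$I3 * sc) - nsq (g$I3$I3 * sc) = sgn r"
    unfolding sc_def by (rule scale_vec[OF r_def[symmetric] r0])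
  show ?thesis
  proof (cases "r < 0")
    case True
    then obtain h l where h: "h \<in> Hgrp G" "l \<noteq> 0" "h$I1$I3 = g$I1$I3 * sc * l"
      "h$I2$I3 = g$I2$I3 * sc * l" "h$I3$I3 = g$I3$I3 * sc * l"
      using TN[of "g$I1$I3 * sc" "g$I2$I3 * sc" "g$I3$I3 * sc"] sv by auto
    have hc: "h$i$I3 = g$i$I3 * (sc * l)" for i using h(3-5) by (cases i) (simp_all add: mult.assoc)
    have l': "sc * l \<noteq> 0" using sc0 h(2) by simp
    note T = transfer[OF h(1) g l' hc]
    define q where "q = matrix_inv h ** g"
    have q3: "q$I1$I3 = 0" "q$I2$I3 = 0" "q$I3$I3 = rinv (sc * l)" using T(1) by (simp_all add: q_def)
    have qM: "ctrans q ** Jmat ** q = M" using T(2) by (simp add: q_def M_def)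
    have "q$I3$I1 = 0" "q$I3$I2 = 0"
      using arg_cong[OF qM, of "\<lambda>m. m$I1$I3"] arg_cong[OF qM, of "\<lambda>m. m$I2$I3"] M13 q3 rinv_nz[OF l']
      by (simp_all add: form_entry)
    then have qR: "q \<in> RowP G I3" using T(4) by (simp add: RowP_def ix_all q_def)
    have "Q = conjset h (conjset q (RowP G I3))"
      using Q T(3) by (simp add: conjset_mult[symmetric] H_G[OF h(1)] T(4) q_def)
    also have "\<dots> = conjset h (RowP G I3)" by (simp add: subgroup_conjset_self[OF RowP_subgroup qR])
    finally show ?thesis using h(1) by blast
  next
    case False
    then have rp: "r > 0" using r0 by simp
    then obtain h l where h: "h \<in> Hgrp G" "l \<noteq> 0" "h$I1$I1 = g$I1$I3 * sc * l"
      "h$I2$I1 = g$I2$I3 * sc * l" "h$I3$I1 = g$I3$I3 * sc * l"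
      using TP[of "g$I1$I3 * sc" "g$I2$I3 * sc" "g$I3$I3 * sc"] sv by auto
    have hc: "h$i$I1 = g$i$I3 * (sc * l)" for i using h(3-5) by (cases i) (simp_all add: mult.assoc)
    have l': "sc * l \<noteq> 0" using sc0 h(2) by simp
    note T = transfer[OF h(1) g l' hc]
    define q where "q = matrix_inv h ** g"
    have q3: "q$I1$I3 = rinv (sc * l)" "q$I2$I3 = 0" "q$I3$I3 = 0" using T(1) by (simp_all add: q_def)
    have qM: "ctrans q ** Jmat ** q = M" using T(2) by (simp add: q_def M_def)
    have q1: "q$I1$I1 = 0" "q$I1$I2 = 0"
      using arg_cong[OF qM, of "\<lambda>m. m$I1$I3"] arg_cong[OF qM, of "\<lambda>m. m$I2$I3"] M13 q3 rinv_nz[OF l']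
      by (simp_all add: form_entry)
    define q' where "q' = matrix_inv wcm ** q"
    have qG: "q \<in> G" using T(4) by (simp add: q_def)
    have q'R: "q' \<in> RowP G I3"
      using q1 G_mult[OF G_minv[OF wc_G] qG] by (simp add: q'_def RowP_def ix_all minv_wc mm_entry)
    have gq: "g = h ** wcm ** q'"
      using T(3) by (simp add: q'_def q_def matrix_mul_assoc inv_right_cancel[OF wc_G])
    have "Q = conjset h (conjset wcm (conjset q' (RowP G I3)))"
      using Q gq by (simp add: conjset_mult H_G[OF h(1)] wc_G G_mult RowP_sub[THEN subsetD, OF q'R])
    also have "\<dots> = conjset h (RowP G I1)"
      by (simp add: subgroup_conjset_self[OF RowP_subgroup q'R] conj_wc_RowP)
    finally show ?thesis using h(1) by blast
  qed
qed

end


context sgrp begin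

lemma BR3:
  assumes g: "g \<in> G" and Q: "Q = conjset g (ColP G I1)" and sQ: "sigma ` Q = conjset g (RowP G I1)"
  shows "\<exists>h\<in>Hgrp G. Q = conjset h (ColP G I1) \<or> Q = conjset h (ColP G I2)"
proof -
  have s1: "sigma ` Q = conjset (sigma g) (RowP G I1)"
    using Q sigma_conjset[OF ColP_sub g] sigma_ColP by simp
  define k where "k = matrix_inv g ** sigma g"
  have kG: "k \<in> G" by (simp add: k_def G_mult G_minv sigma_G g)
  have "conjset k (RowP G I1) = conjset (matrix_inv g) (conjset g (RowP G I1))"
    using s1 sQ by (simp add: k_def conjset_mult G_minv sigma_G g)
  also have "\<dots> = RowP G I1" by (rule conjset_inv[OF g])
  finally have kR: "k \<in> RowP G I1" by (rule norm_RowP[OF kG])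
  define M where "M = ctrans g ** Jmat ** g"
  have Mk: "M ** k = Jmat" unfolding M_def k_def by (rule form_sigma[OF g])
  have M: "M = Jmat ** matrix_inv k"
  proof -
    have "M = M ** (k ** matrix_inv k)" by (simp add: inv_r kG)
    also have "\<dots> = Jmat ** matrix_inv k" by (simp add: matrix_mul_assoc Mk)
    finally show ?thesis .
  qed
  have kiR: "matrix_inv k \<in> RowP G I1" by (rule RowP_minv[OF kR])
  then have ki: "matrix_inv k$I1$I2 = 0" "matrix_inv k$I1$I3 = 0" by (auto simp: RowP_def ix_all)
  have ki1: "matrix_inv k$I1$I1 \<noteq> 0"
    using not_G_zero_row[OF RowP_sub[THEN subsetD, OF kiR], of I1] ki by (auto simp: ix_all)
  have M11: "M$I1$I1 \<noteq> 0"
    using ki1 by (simp_all add: M mm_entry Jmat_entry)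
  define r where "r = nsq (g$I1$I1) - nsq (g$I2$I1) - nsq (g$I3$I1)"
  have Mr: "M$I1$I1 = ofr r" by (simp add: M_def form_diag r_def)
  have r0: "r \<noteq> 0" using M11 Mr by auto
  define sc where "sc = (ofr (1 / sqrt \<bar>r\<bar>) :: 'a)"
  have sc0: "sc \<noteq> 0" using r0 by (simp add: sc_def)
  have sv: "nsq (g$I1$I1 * sc) - nsq (g$I2$I1 * sc) - nsq (g$I3$I1 * sc) = sgn r"
    unfolding sc_def by (rule scale_vec[OF r_def[symmetric] r0])
  show ?thesis
  proof (cases "r < 0")
    case True
    then obtain h l where h: "h \<in> Hgrp G" "l \<noteq> 0" "h$I1$I2 = g$I1$I1 * sc * l"
      "h$I2$I2 = g$I2$I1 * sc * l" "h$I3$I2 = g$I3$I1 * sc * l"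
      using TN2[of "g$I1$I1 * sc" "g$I2$I1 * sc" "g$I3$I1 * sc"] sv by auto
    have hc: "h$i$I2 = g$i$I1 * (sc * l)" for i using h(3-5) by (cases i) (simp_all add: mult.assoc)
    have l': "sc * l \<noteq> 0" using sc0 h(2) by simp
    note T = transfer[OF h(1) g l' hc]
    define q where "q = matrix_inv h ** g"
    have q1: "q$I1$I1 = 0" "q$I3$I1 = 0" using T(1) by (simp_all add: q_def)
    define q' where "q' = matrix_inv s1m ** q"
    have qG: "q \<in> G" using T(4) by (simp add: q_def)
    have q'C: "q' \<in> ColP G I1"
      using q1 G_mult[OF G_minv[OF s1_G] qG] by (simp add: q'_def ColP_def ix_all minv_s1 mm_entry)
    have gq: "g = h ** s1m ** q'"
      using T(3) by (simp add: q'_def q_def matrix_mul_assoc inv_right_cancel[OF s1_G])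
    have "Q = conjset h (conjset s1m (conjset q' (ColP G I1)))"
      using Q gq by (simp add: conjset_mult H_G[OF h(1)] s1_G G_mult ColP_sub[THEN subsetD, OF q'C])
    also have "\<dots> = conjset h (ColP G I2)"
      by (simp add: subgroup_conjset_self[OF ColP_subgroup q'C] conj_s1_ColP)
    finally show ?thesis using h(1) by blast
  next
    case False
    then have rp: "r > 0" using r0 by simp
    then obtain h l where h: "h \<in> Hgrp G" "l \<noteq> 0" "h$I1$I1 = g$I1$I1 * sc * l"
      "h$I2$I1 = g$I2$I1 * sc * l" "h$I3$I1 = g$I3$I1 * sc * l"
      using TP[of "g$I1$I1 * sc" "g$I2$I1 * sc" "g$I3$I1 * sc"] sv by auto
    have hc: "h$i$I1 = g$i$I1 * (sc * l)" for i using h(3-5) by (cases i) (simp_all add: mult.assoc)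
    have l': "sc * l \<noteq> 0" using sc0 h(2) by simp
    note T = transfer[OF h(1) g l' hc]
    define q where "q = matrix_inv h ** g"
    have "q$I2$I1 = 0" "q$I3$I1 = 0" using T(1) by (simp_all add: q_def)
    then have qC: "q \<in> ColP G I1" using T(4) by (simp add: ColP_def ix_all q_def)
    have "Q = conjset h (conjset q (ColP G I1))"
      using Q T(3) by (simp add: conjset_mult[symmetric] H_G[OF h(1)] T(4) q_def)
    also have "\<dots> = conjset h (ColP G I1)" by (simp add: subgroup_conjset_self[OF ColP_subgroup qC])
    finally show ?thesis using h(1) by blast
  qed
qed

lemma parabolic_conj: "parabolic G Q \<Longrightarrow> g \<in> G \<Longrightarrow> parabolic G (conjset g Q)"
proof -
  assume P: "parabolic G Q" and g: "g \<in> G"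
  then obtain g' where g': "g' \<in> G" "conjset g' (min_parabolic G) \<subseteq> Q" by (auto simp: parabolic_def)
  have "conjset (g ** g') (min_parabolic G) \<subseteq> conjset g Q"
    using g g' by (simp add: conjset_mult conjset_mono)
  moreover have "g ** g' \<in> G" using g g' G_mult by blast
  ultimately show ?thesis using P g subgroup_conj by (auto simp: parabolic_def)
qed

lemma parabolic_sub: "parabolic G Q \<Longrightarrow> Q \<subseteq> G"
  by (simp add: parabolic_def is_subgroup_def)

lemma maximal_conj:
  assumes M: "maximal_parabolic G Q" and g: "g \<in> G"
  shows "maximal_parabolic G (conjset g Q)"
  unfolding maximal_parabolic_def
proof (intro conjI allI impI)
  have P: "parabolic G Q" "Q \<noteq> G" using M by (auto simp: maximal_parabolic_def)
  show "parabolic G (conjset g Q)" by (rule parabolic_conj[OF P(1) g])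
  show "conjset g Q \<noteq> G"
  proof
    assume "conjset g Q = G"
    then have "Q = conjset (matrix_inv g) G" by (metis conjset_inv g)
    then show False using P(2) conjset_G[OF G_minv[OF g]] by simp
  qed
  fix Q' assume h: "parabolic G Q' \<and> conjset g Q \<subseteq> Q' \<and> Q' \<noteq> G"
  have "parabolic G (conjset (matrix_inv g) Q')" using h parabolic_conj G_minv g by blast
  moreover have "Q \<subseteq> conjset (matrix_inv g) Q'"
    using conjset_mono[of "conjset g Q" Q' "matrix_inv g"] h conjset_inv[OF g] by simp
  moreover have "conjset (matrix_inv g) Q' \<noteq> G"
  proof
    assume "conjset (matrix_inv g) Q' = G"
    then have "Q' = conjset g G" by (metis conjset_inv2 g)
    then show False using h conjset_G[OF g] by simp
  qed
  ultimately have "conjset (matrix_inv g) Q' = Q" using M by (auto simp: maximal_parabolic_def)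
  then show "Q' = conjset g Q" by (metis conjset_inv2 g)
qed

lemma P0_RowP3: "min_parabolic G \<subseteq> RowP G I3"
  by (auto simp: P0_iff RowP_def ix_all)
lemma P0_ColP1: "min_parabolic G \<subseteq> ColP G I1"
  by (auto simp: P0_iff ColP_def ix_all)

lemma RowP3_parabolic: "parabolic G (RowP G I3)"
  unfolding parabolic_def using RowP_subgroup P0_RowP3 G_one by force
lemma ColP1_parabolic: "parabolic G (ColP G I1)"
  unfolding parabolic_def using ColP_subgroup P0_ColP1 G_one by force

lemma U21_RowP3: "U I2 I1 1 \<in> RowP G I3" by (simp add: U_RowP)
lemma U21_notColP1: "U I2 I1 1 \<notin> ColP G I1" by (simp add: ColP_def U_entry)
lemma U32_ColP1: "U I3 I2 1 \<in> ColP G I1" by (simp add: U_ColP)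
lemma U32_notRowP3: "U I3 I2 1 \<notin> RowP G I3" by (simp add: RowP_def U_entry)

lemma RowP3_max: "maximal_parabolic G (RowP G I3)"
  unfolding maximal_parabolic_def
proof (intro conjI allI impI)
  show "parabolic G (RowP G I3)" by (rule RowP3_parabolic)
  show "RowP G I3 \<noteq> G" using U32_notRowP3 G_U[of I3 I2 1] by auto
  fix Q' assume h: "parabolic G Q' \<and> RowP G I3 \<subseteq> Q' \<and> Q' \<noteq> G"
  then have "is_subgroup G Q'" "min_parabolic G \<subseteq> Q'" using P0_RowP3 by (auto simp: parabolic_def)
  then have "Q' \<subseteq> RowP G I3 \<or> Q' \<subseteq> ColP G I1 \<or> Q' = G" by (rule classify)
  then show "Q' = RowP G I3" using h U21_RowP3 U21_notColP1 by blast
qed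

lemma ColP1_max: "maximal_parabolic G (ColP G I1)"
  unfolding maximal_parabolic_def
proof (intro conjI allI impI)
  show "parabolic G (ColP G I1)" by (rule ColP1_parabolic)
  show "ColP G I1 \<noteq> G" using U21_notColP1 G_U[of I2 I1 1] by auto
  fix Q' assume h: "parabolic G Q' \<and> ColP G I1 \<subseteq> Q' \<and> Q' \<noteq> G"
  then have "is_subgroup G Q'" "min_parabolic G \<subseteq> Q'" using P0_ColP1 by (auto simp: parabolic_def)
  then have "Q' \<subseteq> RowP G I3 \<or> Q' \<subseteq> ColP G I1 \<or> Q' = G" by (rule classify)
  then show "Q' = ColP G I1" using h U32_ColP1 U32_notRowP3 by blast
qed

end


context sgrp begin

lemma SP1: "RowP G I3 \<in> sigma_parabolics G"
  unfolding sigma_parabolics_def opposite_def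
  using RowP3_max RowP3_parabolic P0_RowP3 G_one sigma_RowP theta_RowP
  by (auto intro!: bexI[of _ "mat 1"] exI[of _ "RowP G I3"])

lemma SP3: "ColP G I1 \<in> sigma_parabolics G"
  unfolding sigma_parabolics_def opposite_def
  using ColP1_max ColP1_parabolic P0_ColP1 G_one sigma_ColP theta_ColP
  by (auto intro!: bexI[of _ "mat 1"] exI[of _ "ColP G I1"])

lemma SP2: "RowP G I1 \<in> sigma_parabolics G"
proof -
  have m: "maximal_parabolic G (RowP G I1)"
    using maximal_conj[OF RowP3_max wc_G] conj_wc_RowP by simp
  have "opposite G (RowP G I1) (sigma ` RowP G I1)"
    unfolding opposite_def
    by (intro bexI[of _ wcm] exI[of _ "RowP G I3"] conjI RowP3_parabolic P0_RowP3 wc_G)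
       (simp_all add: conj_wc_RowP sigma_RowP theta_RowP conj_wc_ColP)
  then show ?thesis using m by (simp add: sigma_parabolics_def)
qed

lemma SP4: "ColP G I2 \<in> sigma_parabolics G"
proof -
  have m: "maximal_parabolic G (ColP G I2)"
    using maximal_conj[OF ColP1_max s1_G] conj_s1_ColP by simp
  have "opposite G (ColP G I2) (sigma ` ColP G I2)"
    unfolding opposite_def
    by (intro bexI[of _ s1m] exI[of _ "ColP G I1"] conjI ColP1_parabolic P0_ColP1 s1_G)
       (simp_all add: conj_s1_ColP sigma_ColP theta_ColP conj_s1_RowP)
  then show ?thesis using m by (simp add: sigma_parabolics_def)
qed

lemma SP_classify:
  assumes Q: "Q \<in> sigma_parabolics G"
  shows "\<exists>h\<in>Hgrp G. Q = conjset h (RowP G I3) \<or> Q = conjset h (RowP G I1) \<or>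
                     Q = conjset h (ColP G I1) \<or> Q = conjset h (ColP G I2)"
proof -
  have M: "maximal_parabolic G Q" and O: "opposite G Q (sigma ` Q)"
    using Q by (auto simp: sigma_parabolics_def)
  obtain g P where g: "g \<in> G" and P: "parabolic G P" "min_parabolic G \<subseteq> P"
    and QP: "Q = conjset g P" and sQ: "sigma ` Q = conjset g (theta ` P)"
    using O by (auto simp: opposite_def)
  have MQ: "parabolic G Q" "Q \<noteq> G" "\<And>Q'. parabolic G Q' \<Longrightarrow> Q \<subseteq> Q' \<Longrightarrow> Q' \<noteq> G \<Longrightarrow> Q' = Q"
    using M by (auto simp: maximal_parabolic_def)
  have "is_subgroup G P" using P by (simp add: parabolic_def)
  then have c: "P \<subseteq> RowP G I3 \<or> P \<subseteq> ColP G I1 \<or> P = G" using P(2) by (rule classify)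
  consider "P \<subseteq> RowP G I3" | "P \<subseteq> ColP G I1" | "P = G" using c by blast
  then show ?thesis
  proof cases
    case 1
    have m: "maximal_parabolic G (conjset g (RowP G I3))" by (rule maximal_conj[OF RowP3_max g])
    have "conjset g (RowP G I3) = Q"
      using MQ(3)[of "conjset g (RowP G I3)"] m QP conjset_mono[OF 1] by (auto simp: maximal_parabolic_def)
    then have Q1: "Q = conjset g (RowP G I3)" and PR: "P = RowP G I3" using QP conjset_inj[OF g] by auto
    have "sigma ` Q = conjset g (ColP G I3)" using sQ PR theta_RowP by simp
    then show ?thesis using BR1[OF g Q1] by blast
  next
    case 2
    have m: "maximal_parabolic G (conjset g (ColP G I1))" by (rule maximal_conj[OF ColP1_max g])
    have "conjset g (ColP G I1) = Q"
      using MQ(3)[of "conjset g (ColP G I1)"] m QP conjset_mono[OF 2] by (auto simp: maximal_parabolic_def)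
    then have Q3: "Q = conjset g (ColP G I1)" and PC: "P = ColP G I1" using QP conjset_inj[OF g] by auto
    have "sigma ` Q = conjset g (RowP G I1)" using sQ PC theta_ColP by simp
    then show ?thesis using BR3[OF g Q3] by blast
  next
    case 3
    then show ?thesis using QP MQ(2) conjset_G[OF g] by simp
  qed
qed

lemma orbit_conj: assumes h: "h \<in> Hgrp G" shows "H_orbit G (conjset h A) = H_orbit G A"
proof
  have hG: "h \<in> G" by (rule H_G[OF h])
  show "H_orbit G (conjset h A) \<subseteq> H_orbit G A"
  proof
    fix X assume "X \<in> H_orbit G (conjset h A)"
    then obtain h' where h': "h' \<in> Hgrp G" "X = conjset h' (conjset h A)" by (auto simp: H_orbit_def)
    then have "X = conjset (h' ** h) A" by (simp add: conjset_mult H_G hG)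
    then show "X \<in> H_orbit G A" using H_mult[OF h'(1) h] by (auto simp: H_orbit_def)
  qed
  show "H_orbit G A \<subseteq> H_orbit G (conjset h A)"
  proof
    fix X assume "X \<in> H_orbit G A"
    then obtain h' where h': "h' \<in> Hgrp G" "X = conjset h' A" by (auto simp: H_orbit_def)
    have "X = conjset (h' ** matrix_inv h) (conjset h A)"
      using h' by (simp add: conjset_mult H_G hG G_minv conjset_inv)
    then show "X \<in> H_orbit G (conjset h A)" using H_mult[OF h'(1) H_minv[OF h]] by (auto simp: H_orbit_def)
  qed
qed

lemma orbit_self: "A \<in> H_orbit G A"
  using H_one by (auto simp: H_orbit_def intro!: exI[of _ "mat 1"])

lemma orbit_ne: assumes "\<And>h. h \<in> Hgrp G \<Longrightarrow> B \<noteq> conjset h A" shows "H_orbit G A \<noteq> H_orbit G B"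
proof
  assume "H_orbit G A = H_orbit G B"
  then have "B \<in> H_orbit G A" using orbit_self by simp
  then show False using assms by (auto simp: H_orbit_def)
qed

lemma D12: "h \<in> Hgrp G \<Longrightarrow> RowP G I1 \<noteq> conjset h (RowP G I3)"
proof
  assume h: "h \<in> Hgrp G" and e: "RowP G I1 = conjset h (RowP G I3)"
  have hG: "h \<in> G" by (rule H_G[OF h])
  have "conjset (matrix_inv wcm ** h) (RowP G I3) = conjset (matrix_inv wcm) (conjset wcm (RowP G I3))"
    by (simp add: conjset_mult G_minv wc_G hG flip: e conj_wc_RowP)
  also have "\<dots> = RowP G I3" by (rule conjset_inv[OF wc_G])
  finally have "matrix_inv wcm ** h \<in> RowP G I3" by (rule norm_RowP[OF G_mult[OF G_minv[OF wc_G] hG]])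
  then have "(matrix_inv wcm ** h)$I3$I1 = 0" by (simp add: RowP_def)
  then have "h$I1$I1 = 0" by (simp add: minv_wc mm_entry)
  then show False using H11_nz[OF h] by simp
qed

lemma D34: "h \<in> Hgrp G \<Longrightarrow> ColP G I2 \<noteq> conjset h (ColP G I1)"
proof
  assume h: "h \<in> Hgrp G" and e: "ColP G I2 = conjset h (ColP G I1)"
  have hG: "h \<in> G" by (rule H_G[OF h])
  have "conjset (matrix_inv s1m ** h) (ColP G I1) = conjset (matrix_inv s1m) (conjset s1m (ColP G I1))"
    by (simp add: conjset_mult G_minv s1_G hG flip: e conj_s1_ColP)
  also have "\<dots> = ColP G I1" by (rule conjset_inv[OF s1_G])
  finally have "matrix_inv s1m ** h \<in> ColP G I1" by (rule norm_ColP[OF G_mult[OF G_minv[OF s1_G] hG]])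
  then have "(matrix_inv s1m ** h)$I2$I1 = 0" by (simp add: ColP_def)
  then have "h$I1$I1 = 0" by (simp add: minv_s1 mm_entry)
  then show False using H11_nz[OF h] by simp
qed

lemma D13: "h \<in> Hgrp G \<Longrightarrow> ColP G I1 \<noteq> conjset h (RowP G I3)"
  using not_conj_Q1_Q3[OF H_G] by metis

lemma D14: "h \<in> Hgrp G \<Longrightarrow> ColP G I2 \<noteq> conjset h (RowP G I3)"
proof
  assume h: "h \<in> Hgrp G" and e: "ColP G I2 = conjset h (RowP G I3)"
  have hG: "h \<in> G" by (rule H_G[OF h])
  have "conjset (matrix_inv s1m ** h) (RowP G I3) = conjset (matrix_inv s1m) (conjset s1m (ColP G I1))"
    by (simp add: conjset_mult G_minv s1_G hG flip: e conj_s1_ColP)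
  also have "\<dots> = ColP G I1" by (rule conjset_inv[OF s1_G])
  finally show False using not_conj_Q1_Q3[OF G_mult[OF G_minv[OF s1_G] hG]] by simp
qed

lemma D23: "h \<in> Hgrp G \<Longrightarrow> ColP G I1 \<noteq> conjset h (RowP G I1)"
proof
  assume h: "h \<in> Hgrp G" and e: "ColP G I1 = conjset h (RowP G I1)"
  have hG: "h \<in> G" by (rule H_G[OF h])
  have "conjset (h ** wcm) (RowP G I3) = ColP G I1"
    by (simp add: conjset_mult wc_G hG e conj_wc_RowP)
  then show False using not_conj_Q1_Q3[OF G_mult[OF hG wc_G]] by simp
qed

lemma D24: "h \<in> Hgrp G \<Longrightarrow> ColP G I2 \<noteq> conjset h (RowP G I1)"
proof
  assume h: "h \<in> Hgrp G" and e: "ColP G I2 = conjset h (RowP G I1)"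
  have hG: "h \<in> G" by (rule H_G[OF h])
  have "conjset (matrix_inv s1m ** (h ** wcm)) (RowP G I3) = conjset (matrix_inv s1m) (conjset s1m (ColP G I1))"
    by (simp add: conjset_mult G_minv s1_G wc_G G_mult hG conj_wc_RowP flip: e conj_s1_ColP)
  also have "\<dots> = ColP G I1" by (rule conjset_inv[OF s1_G])
  finally show False using not_conj_Q1_Q3[OF G_mult[OF G_minv[OF s1_G] G_mult[OF hG wc_G]]] by simp
qed

theorem four_orbits: "four_orbits G"
proof -
  let ?O1 = "H_orbit G (RowP G I3)" and ?O2 = "H_orbit G (RowP G I1)"
  let ?O3 = "H_orbit G (ColP G I1)" and ?O4 = "H_orbit G (ColP G I2)"
  have img: "H_orbit G ` sigma_parabolics G = {?O1, ?O2, ?O3, ?O4}"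
  proof
    show "H_orbit G ` sigma_parabolics G \<subseteq> {?O1, ?O2, ?O3, ?O4}"
    proof
      fix X assume "X \<in> H_orbit G ` sigma_parabolics G"
      then obtain Q where Q: "Q \<in> sigma_parabolics G" "X = H_orbit G Q" by blast
      obtain h where h: "h \<in> Hgrp G" and "Q = conjset h (RowP G I3) \<or> Q = conjset h (RowP G I1) \<or>
                     Q = conjset h (ColP G I1) \<or> Q = conjset h (ColP G I2)"
        using SP_classify[OF Q(1)] by blast
      then show "X \<in> {?O1, ?O2, ?O3, ?O4}" using Q(2) orbit_conj[OF h] by auto
    qed
    show "{?O1, ?O2, ?O3, ?O4} \<subseteq> H_orbit G ` sigma_parabolics G"
      using SP1 SP2 SP3 SP4 by blast
  qed
  have n12: "?O1 \<noteq> ?O2" by (rule orbit_ne) (rule D12)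
  have n13: "?O1 \<noteq> ?O3" by (rule orbit_ne) (rule D13)
  have n14: "?O1 \<noteq> ?O4" by (rule orbit_ne) (rule D14)
  have n23: "?O2 \<noteq> ?O3" by (rule orbit_ne) (rule D23)
  have n24: "?O2 \<noteq> ?O4" by (rule orbit_ne) (rule D24)
  have n34: "?O3 \<noteq> ?O4" by (rule orbit_ne) (rule D34)
  have "card {?O1, ?O2, ?O3, ?O4} = 4"
    using n12 n13 n14 n23 n24 n34 by simp
  then show ?thesis unfolding four_orbits_def Q_RowColP img by simp
qed

end


lemma det_U_field: "i \<noteq> j \<Longrightarrow> det (U i j t :: 'a::field mat3) = 1"
proof -
  assume ij: "i \<noteq> j"
  have "U i j t = ((\<chi> k. if k = i then row i (mat 1) + t *s row j (mat 1) else row k (mat 1)) :: 'a mat3)"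
    using ij by (auto simp: vec_eq_iff U_entry row_def mat_def)
  then show ?thesis using det_row_operation[OF ij, of "mat 1 :: 'a mat3" t] by simp
qed

lemma sgrp_field:
  fixes G :: "('a::{field,qfield}) mat3 set"
  assumes GD: "G = {g. det g = 1}"
    and ct: "\<And>g. det (ctrans g :: 'a mat3) = conjf (det g)"
    and c1: "continuous_on (UNIV::('a\<times>'a) set) (\<lambda>p. fst p + snd p)"
    and c2: "\<And>c. continuous_on (UNIV::'a set) (\<lambda>x. c * x)"
    and c3: "\<And>c. continuous_on (UNIV::'a set) (\<lambda>x. x * c)"
    and c4: "continuous_on (UNIV::real set) (ofr :: real \<Rightarrow> 'a)"
  shows "sgrp G"
proof
  fix g h :: "'a mat3" and i j :: ix and t :: 'a
  show "g \<in> G \<Longrightarrow> invertible g" by (simp add: GD invertible_det_nz)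
  show "g \<in> G \<Longrightarrow> h \<in> G \<Longrightarrow> g ** h \<in> G" by (simp add: GD det_mul)
  show "mat 1 \<in> G" by (simp add: GD)
  show "g \<in> G \<Longrightarrow> matrix_inv g \<in> G"
  proof -
    assume g: "g \<in> G"
    then have "g ** matrix_inv g = mat 1" using matrix_inv_props[of g] by (simp add: GD invertible_det_nz)
    then have "det g * det (matrix_inv g) = 1" by (metis det_mul det_I)
    then show ?thesis using g by (simp add: GD)
  qed
  show "i \<noteq> j \<Longrightarrow> U i j t \<in> G" by (simp add: GD det_U_field)
  show "g \<in> G \<Longrightarrow> ctrans g \<in> G" by (simp add: GD ct)
qed (use c1 c2 c3 c4 in auto)

lemma det_ctrans_real: "det (ctrans (g :: real mat3)) = conjf (det g)"
proof -
  have "ctrans g = transpose g" by (simp add: vec_eq_iff ctrans_def transpose_def conjf_real_def)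
  then show ?thesis by (simp add: conjf_real_def)
qed

lemma det_cnj: "det (\<chi> i j. cnj ((A :: complex^'n^'n) $ i $ j)) = cnj (det A)"
  by (simp add: det_def cnj_sum cnj_prod)

lemma det_ctrans_complex: "det (ctrans (g :: complex mat3)) = conjf (det g)"
proof -
  have "ctrans g = transpose (\<chi> i j. cnj (g $ i $ j))" by (simp add: vec_eq_iff ctrans_def transpose_def conjf_complex_def)
  then show ?thesis by (simp add: conjf_complex_def det_cnj)
qed

lemma sgrp_R: "sgrp SL3R"
  by (rule sgrp_field[OF SL3R_def det_ctrans_real]) (auto simp: ofr_real_def intro!: continuous_intros)

lemma sgrp_C: "sgrp SL3C"
  by (rule sgrp_field[OF SL3C_def det_ctrans_complex]) (auto simp: ofr_complex_def intro!: continuous_intros)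


lemma qz_add: "qz (a + b) = qz a + qz b" and qw_add: "qw (a + b) = qw a + qw b"
  by (simp_all add: qz_def qw_def plus_quat_def complex_eq_iff)

lemma qz_mult: "qz (a * b) = qz a * qz b - qw a * cnj (qw b)"
  and qw_mult: "qw (a * b) = qz a * qw b + qw a * cnj (qz b)"
  by (simp_all add: qz_def qw_def times_quat_def complex_eq_iff algebra_simps)

lemma qz_0[simp]: "qz 0 = 0" and qw_0[simp]: "qw 0 = 0" and qz_1[simp]: "qz 1 = 1" and qw_1[simp]: "qw 1 = 0"
  by (simp_all add: qz_def qw_def zero_quat_def one_quat_def complex_eq_iff)

lemma qz_conj: "qz (conjf q) = cnj (qz q)" and qw_conj: "qw (conjf q) = - qw q"
  by (simp_all add: qz_def qw_def conjf_quat_def complex_eq_iff)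

lemma UNIV_ixix: "(UNIV :: (ix + ix) set) = {Inl I1, Inl I2, Inl I3, Inr I1, Inr I2, Inr I3}"
proof -
  have "x \<in> {Inl I1, Inl I2, Inl I3, Inr I1, Inr I2, Inr I3}" for x :: "ix + ix"
  proof (cases x)
    case (Inl a) then show ?thesis by (cases a) simp_all
  next
    case (Inr a) then show ?thesis by (cases a) simp_all
  qed
  then show ?thesis by blast
qed

lemma sum_ixix: "sum f (UNIV :: (ix + ix) set) = f (Inl I1) + f (Inl I2) + f (Inl I3) + f (Inr I1) + f (Inr I2) + f (Inr I3)"
  by (simp add: UNIV_ixix add.assoc)

lemma qc_entry[simp]:
  "quat_to_cmat A $ Inl i $ Inl j = qz (A$i$j)"
  "quat_to_cmat A $ Inl i $ Inr j = qw (A$i$j)"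
  "quat_to_cmat A $ Inr i $ Inl j = - cnj (qw (A$i$j))"
  "quat_to_cmat A $ Inr i $ Inr j = cnj (qz (A$i$j))"
  by (simp_all add: quat_to_cmat_def)

lemma cmm_entry: "((X :: complex^(ix+ix)^(ix+ix)) ** Y) $ r $ s =
  X$r$Inl I1 * Y$Inl I1$s + X$r$Inl I2 * Y$Inl I2$s + X$r$Inl I3 * Y$Inl I3$s +
  X$r$Inr I1 * Y$Inr I1$s + X$r$Inr I2 * Y$Inr I2$s + X$r$Inr I3 * Y$Inr I3$s"
  by (simp add: matrix_matrix_mult_def sum_ixix)

lemma qc_mult: "quat_to_cmat (A ** B) = quat_to_cmat A ** quat_to_cmat B"
proof -
  have "quat_to_cmat (A ** B) $ r $ s = (quat_to_cmat A ** quat_to_cmat B) $ r $ s" for r s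
    by (cases r; cases s; simp only: cmm_entry mm_entry qc_entry qz_add qw_add qz_mult qw_mult complex_cnj_add
        complex_cnj_diff complex_cnj_mult complex_cnj_cnj complex_cnj_minus; simp add: algebra_simps)
  then show ?thesis by (simp add: vec_eq_iff)
qed

lemma qc_one: "quat_to_cmat (mat 1) = mat 1"
proof -
  have "quat_to_cmat (mat 1) $ r $ s = (mat 1 :: complex^(ix+ix)^(ix+ix)) $ r $ s" for r s
    by (cases r; cases s; simp add: mat_def)
  then show ?thesis by (simp add: vec_eq_iff)
qed

lemma qc_ctrans: "quat_to_cmat (ctrans A) = transpose (\<chi> r s. cnj (quat_to_cmat A $ r $ s))"
proof -
  have "quat_to_cmat (ctrans A) $ r $ s = transpose (\<chi> r s. cnj (quat_to_cmat A $ r $ s)) $ r $ s" for r s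
    by (cases r; cases s; simp add: transpose_def ctrans_entry qz_conj qw_conj)
  then show ?thesis by (simp add: vec_eq_iff)
qed

definition rop :: "'n \<Rightarrow> 'n \<Rightarrow> complex \<Rightarrow> complex^'n^'n \<Rightarrow> complex^'n^'n" where
  "rop k l c A = (\<chi> m. if m = k then A$m + c *s A$l else A$m)"

lemma det_rop: "k \<noteq> l \<Longrightarrow> det (rop k l c (A :: complex^'n::finite^'n)) = det A"
proof -
  assume kl: "k \<noteq> l"
  have "rop k l c A = (\<chi> m. if m = k then row k A + c *s row l A else row m A)"
    by (simp add: rop_def row_def vec_eq_iff)
  then show ?thesis using det_row_operation[OF kl, of A c] by simp
qed

lemma det_qc_U: assumes ij: "i \<noteq> j" shows "det (quat_to_cmat (U i j t)) = 1"
proof -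
  let ?I = "mat 1 :: complex^(ix+ix)^(ix+ix)"
  have e: "quat_to_cmat (U i j t) = rop (Inr i) (Inr j) (cnj (qz t)) (rop (Inr i) (Inl j) (- cnj (qw t))
            (rop (Inl i) (Inr j) (qw t) (rop (Inl i) (Inl j) (qz t) ?I)))"
  proof -
    have "quat_to_cmat (U i j t) $ r $ s = rop (Inr i) (Inr j) (cnj (qz t)) (rop (Inr i) (Inl j) (- cnj (qw t))
            (rop (Inl i) (Inr j) (qw t) (rop (Inl i) (Inl j) (qz t) ?I))) $ r $ s" for r s
      using ij by (cases r; cases s; auto simp: rop_def U_entry mat_def)
    then show ?thesis by (simp add: vec_eq_iff)
  qed
  show ?thesis unfolding e using ij by (simp add: det_rop)
qed

lemma invertible_U: "i \<noteq> j \<Longrightarrow> invertible (U i j t :: 'a::ring_1 mat3)"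
  unfolding invertible_def by (rule exI[of _ "U i j (-t)"]) (simp add: U_mult_U U_0)

lemma sgrp_H: "sgrp SL3H"
proof
  fix g h :: "quat mat3" and i j :: ix and t :: quat
  show "g \<in> SL3H \<Longrightarrow> invertible g" by (simp add: SL3H_def)
  show "g \<in> SL3H \<Longrightarrow> h \<in> SL3H \<Longrightarrow> g ** h \<in> SL3H"
    by (simp add: SL3H_def invertible_mult qc_mult det_mul)
  show "mat 1 \<in> SL3H"
    by (simp add: SL3H_def qc_one invertible_def)
  show "g \<in> SL3H \<Longrightarrow> matrix_inv g \<in> SL3H"
  proof -
    assume g: "g \<in> SL3H"
    then have inv: "invertible g" by (simp add: SL3H_def)
    have "invertible (matrix_inv g)" unfolding invertible_def
      using matrix_inv_props[OF inv] by blast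
    moreover have "det (quat_to_cmat (matrix_inv g)) * det (quat_to_cmat g) = 1"
      by (simp add: det_mul[symmetric] qc_mult[symmetric] matrix_inv_props[OF inv] qc_one)
    ultimately show ?thesis using g by (simp add: SL3H_def)
  qed
  show "i \<noteq> j \<Longrightarrow> U i j t \<in> SL3H" by (simp add: SL3H_def invertible_U det_qc_U)
  show "g \<in> SL3H \<Longrightarrow> ctrans g \<in> SL3H"
  proof -
    assume g: "g \<in> SL3H"
    then have inv: "invertible g" by (simp add: SL3H_def)
    have "ctrans g ** ctrans (matrix_inv g) = mat 1" "ctrans (matrix_inv g) ** ctrans g = mat 1"
      by (simp_all add: ctrans_mult[symmetric] matrix_inv_props[OF inv])
    then have "invertible (ctrans g)" unfolding invertible_def by blast
    moreover have "det (quat_to_cmat (ctrans g)) = 1"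
      using g by (simp add: qc_ctrans det_cnj SL3H_def)
    ultimately show ?thesis by (simp add: SL3H_def)
  qed
qed (use quat_cont_add quat_cont_mult quat_cont_ofr in auto)

theorem proposition1p6:
  shows "four_orbits SL3R \<and> four_orbits SL3C \<and> four_orbits SL3H"
  using sgrp.four_orbits[OF sgrp_R] sgrp.four_orbits[OF sgrp_C] sgrp.four_orbits[OF sgrp_H] by blast


end
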